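(* For every $\beta\in(0,1]$, every integer $n>2$ and every integer $K$ with $1\le K\le\min\{n-1,e^{1/(5\beta)}\}$, there exists a competing content creation game $\mathcal G=(\{\mathcal S_i\}_{i=1}^n,\mathcal X,\sigma,\beta,K)$ with $n$ players such that $$PoA(\mathcal G)>\frac{n-1}{n}+\frac{1}{1+5\beta\log K}.$$
   Context: A competing content creation game $\mathcal G=(\{\mathcal S_i\}_{i=1}^n,\mathcal X,\sigma,\beta,K)$ consists of: a finite set of users $\mathcal X=\{x_1,\dots,x_m\}\subset\mathbb R^d$; players $i\in[n]$, player $i$ having an action set $\mathcal S_i\subset\mathbb R^d$; a relevance function $\sigma:\mathbb R^d\times\mathbb R^d\to[0,1]$; a noise parameter $\beta>0$; and an integer $1\le K\le n$. Let $\mathcal S=\prod_i\mathcal S_i$. For $s=(s_1,\dots,s_n)\in\mathcal S$ and user $x_j$, $\mathcal T_j(s;K)$ is the set of the first $K$ players of an ordering of $[n]$ by non-increasing $\sigma(s_i,x_j)$ (ties broken uniformly at random). Let $\varepsilon_1,\dots,\varepsilon_n$ be i.i.d. Gumbel with location $-\beta\gamma$ and scale $\beta$ (CDF $t\mapsto\exp(-e^{-(t+\beta\gamma)/\beta})$, $\gamma$ the Euler–Mascheroni constant). User $j$ chooses $i_j^*=\arg\max_{i\in\mathcal T_j(s;K)}\{\sigma(s_i,x_j)+\varepsilon_i\}$; $x_j\to s_i$ denotes the event $i_j^*=i$. User utility $\pi_j(s)=\mathbb E[\max_{i\in\mathcal T_j(s;K)}\{\sigma(s_i,x_j)+\varepsilon_i\}]$;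 player utility $u_i(s)=\sum_j\mathbb E[\sigma(s_i,x_j)+\varepsilon_i\mid x_j\to s_i]\Pr[x_j\to s_i]$; welfare $W(s)=\sum_j\pi_j(s)$. A CCE is a distribution $\alpha$ on $\mathcal S$ with $\mathbb E_{s\sim\alpha}[u_i(s)]\ge\mathbb E_{s\sim\alpha}[u_i(s_i',s_{-i})]$ for all $i$ and $s_i'\in\mathcal S_i$. $PoA(\mathcal G)=\max_{s\in\mathcal S}W(s)\big/\min_{\alpha\in CCE(\mathcal G)}\mathbb E_{s\sim\alpha}[W(s)]$. *)

theory Defs
  imports "HOL-Probability.Probability" "HOL-Combinatorics.Multiset_Permutations"
begin

(* Players are 0,...,n-1.  Points of R^d are real lists of length d.
   A strategy profile is an element of PiE {..<n} S. *)

(* Gumbel distribution with location -beta*gamma and scale beta, given by its density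
   (derivative of the CDF  t |-> exp(-exp(-(t + beta*gamma)/beta)) ). *)
definition gumbel_cdf :: "real \<Rightarrow> real \<Rightarrow> real" where
  "gumbel_cdf \<beta> t = exp (- exp (- (t + \<beta> * euler_mascheroni) / \<beta>))"

definition gumbel :: "real \<Rightarrow> real measure" where
  "gumbel \<beta> = density lborel
     (\<lambda>t. ennreal ((1 / \<beta>) * exp (- (t + \<beta> * euler_mascheroni) / \<beta>)
                    * exp (- exp (- (t + \<beta> * euler_mascheroni) / \<beta>))))"

definition noise :: "nat \<Rightarrow> real \<Rightarrow> (nat \<Rightarrow> real) measure" where
  "noise n \<beta> = PiM {..<n} (\<lambda>_. gumbel \<beta>)"

definition orderings :: "nat \<Rightarrow> (nat \<Rightarrow> real) \<Rightarrow> nat list set" where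
  "orderings n v = {l \<in> permutations_of_set {..<n}. sorted_wrt (\<lambda>a b. v a \<ge> v b) l}"

definition topK :: "nat \<Rightarrow> nat \<Rightarrow> (nat \<Rightarrow> real) \<Rightarrow> nat set pmf" where
  "topK n K v = map_pmf (\<lambda>l. set (take K l)) (pmf_of_set (orderings n v))"

(* event x_j -> s_i : i is the (a.s. unique) argmax over T *)
definition chosen :: "nat set \<Rightarrow> (nat \<Rightarrow> real) \<Rightarrow> (nat \<Rightarrow> real) \<Rightarrow> nat \<Rightarrow> bool" where
  "chosen T v \<epsilon> i \<longleftrightarrow> i \<in> T \<and> (\<forall>k\<in>T. k \<noteq> i \<longrightarrow> v k + \<epsilon> k < v i + \<epsilon> i)"

definition user_util ::
  "nat \<Rightarrow> ('p \<Rightarrow> 'p \<Rightarrow> real) \<Rightarrow> real \<Rightarrow> nat \<Rightarrow> (nat \<Rightarrow> 'p) \<Rightarrow> 'p \<Rightarrow> real" where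
  "user_util n \<sigma> \<beta> K s x =
     measure_pmf.expectation (topK n K (\<lambda>i. \<sigma> (s i) x))
       (\<lambda>T. \<integral>\<epsilon>. Max ((\<lambda>i. \<sigma> (s i) x + \<epsilon> i) ` T) \<partial>noise n \<beta>)"

(* player utility u_i(s) = sum_j E[sigma + eps_i | x_j -> s_i] Pr[x_j -> s_i]
                        = sum_j E[(sigma + eps_i) * 1{x_j -> s_i}] *)
definition player_util ::
  "nat \<Rightarrow> 'p set \<Rightarrow> ('p \<Rightarrow> 'p \<Rightarrow> real) \<Rightarrow> real \<Rightarrow> nat \<Rightarrow> nat \<Rightarrow> (nat \<Rightarrow> 'p) \<Rightarrow> real" where
  "player_util n X \<sigma> \<beta> K i s =
     (\<Sum>x\<in>X. measure_pmf.expectation (topK n K (\<lambda>k. \<sigma> (s k) x))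
       (\<lambda>T. \<integral>\<epsilon>. (if chosen T (\<lambda>k. \<sigma> (s k) x) \<epsilon> i then \<sigma> (s i) x + \<epsilon> i else 0)
              \<partial>noise n \<beta>))"

definition welfare ::
  "nat \<Rightarrow> 'p set \<Rightarrow> ('p \<Rightarrow> 'p \<Rightarrow> real) \<Rightarrow> real \<Rightarrow> nat \<Rightarrow> (nat \<Rightarrow> 'p) \<Rightarrow> real" where
  "welfare n X \<sigma> \<beta> K s = (\<Sum>x\<in>X. user_util n \<sigma> \<beta> K s x)"

definition profiles :: "nat \<Rightarrow> (nat \<Rightarrow> 'p set) \<Rightarrow> (nat \<Rightarrow> 'p) set" where
  "profiles n S = PiE {..<n} S"

definition is_CCE ::
  "nat \<Rightarrow> (nat \<Rightarrow> 'p set) \<Rightarrow> 'p set \<Rightarrow> ('p \<Rightarrow> 'p \<Rightarrow> real) \<Rightarrow> real \<Rightarrow> nat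
     \<Rightarrow> (nat \<Rightarrow> 'p) pmf \<Rightarrow> bool" where
  "is_CCE n S X \<sigma> \<beta> K \<alpha> \<longleftrightarrow>
     set_pmf \<alpha> \<subseteq> profiles n S \<and>
     (\<forall>i<n. \<forall>s'\<in>S i.
        measure_pmf.expectation \<alpha> (\<lambda>s. player_util n X \<sigma> \<beta> K i s)
        \<ge> measure_pmf.expectation \<alpha> (\<lambda>s. player_util n X \<sigma> \<beta> K i (s(i := s'))))"

definition PoA ::
  "nat \<Rightarrow> (nat \<Rightarrow> 'p set) \<Rightarrow> 'p set \<Rightarrow> ('p \<Rightarrow> 'p \<Rightarrow> real) \<Rightarrow> real \<Rightarrow> nat \<Rightarrow> real" where
  "PoA n S X \<sigma> \<beta> K =
     Max (welfare n X \<sigma> \<beta> K ` profiles n S) /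
     Inf ((\<lambda>\<alpha>. measure_pmf.expectation \<alpha> (welfare n X \<sigma> \<beta> K)) ` {\<alpha>. is_CCE n S X \<sigma> \<beta> K \<alpha>})"

definition cc_game ::
  "nat \<Rightarrow> nat \<Rightarrow> (nat \<Rightarrow> real list set) \<Rightarrow> real list set \<Rightarrow> (real list \<Rightarrow> real list \<Rightarrow> real)
     \<Rightarrow> real \<Rightarrow> nat \<Rightarrow> bool" where
  "cc_game n d S X \<sigma> \<beta> K \<longleftrightarrow>
     finite X \<and> (\<forall>x\<in>X. length x = d) \<and>
     (\<forall>i<n. finite (S i) \<and> S i \<noteq> {} \<and> (\<forall>a\<in>S i. length a = d)) \<and>
     (\<forall>a b. length a = d \<longrightarrow> length b = d \<longrightarrow> 0 \<le> \<sigma> a b \<and> \<sigma> a b \<le> 1) \<and>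
     0 < \<beta> \<and> 1 \<le> K \<and> K \<le> n"

end

theory Submission
  imports Defs
begin

definition psi :: "real \<Rightarrow> real" where "psi y = exp y * exp (- exp y)"

lemma psi_nonneg: "0 \<le> psi y" by (simp add: psi_def)

lemma psi_h_nn_eq:
  assumes h: "h > -1"
  shows "(\<integral>\<^sup>+y. ennreal (exp (h*y) * psi y) \<partial>lborel) = ennreal (Gamma (1+h))"
proof -
  define F where "F = (\<lambda>y::real. exp (h*y) * psi y)"
  define G where "G = (\<lambda>t::real. t powr h / exp t)"
  have sub: "(\<integral>\<^sup>+x. ennreal (G x * indicator {exp (-real N)..exp (real N)} x) \<partial>lborel) =
             (\<integral>\<^sup>+x. ennreal (F x * indicator {-real N..real N} x) \<partial>lborel)" for N :: nat
  proof -
    have "(\<integral>\<^sup>+x. G x * indicator {exp (-real N)..exp (real N)} x \<partial>lborel) =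
             (\<integral>\<^sup>+x. G (exp x) * exp x * indicator {-real N..real N} x \<partial>lborel)"
      by (rule nn_integral_substitution[where g=exp and g'=exp])
         (auto simp: G_def set_borel_measurable_def intro!: derivative_eq_intros continuous_intros)
    also have "\<dots> = (\<integral>\<^sup>+x. ennreal (F x * indicator {-real N..real N} x) \<partial>lborel)"
    proof (intro nn_integral_cong)
      fix x :: real
      have "G (exp x) * exp x = F x"
        by (simp add: G_def F_def psi_def powr_def exp_minus field_simps mult_exp_exp)
      then show "ennreal (G (exp x) * exp x * indicator {-real N..real N} x) = ennreal (F x * indicator {-real N..real N} x)"
        by simp
    qed
    finally show ?thesis .
  qed
  have limF: "(\<lambda>N. \<integral>\<^sup>+x. ennreal (F x * indicator {-real N..real N} x) \<partial>lborel) \<longlonglongrightarrow> (\<integral>\<^sup>+x. ennreal (F x) \<partial>lborel)"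
  proof (rule nn_integral_LIMSEQ)
    show "incseq (\<lambda>N x. ennreal (F x * indicator {-real N..real N} x))"
      by (auto simp: incseq_def le_fun_def F_def psi_def indicator_def intro!: ennreal_leI)
    show "(\<lambda>N. ennreal (F x * indicator {-real N..real N} x)) \<longlonglongrightarrow> ennreal (F x)" for x
    proof (rule tendsto_eventually)
      obtain N0 :: nat where "\<bar>x\<bar> \<le> real N0" using real_arch_simple by blast
      then show "\<forall>\<^sub>F N in sequentially. ennreal (F x * indicator {-real N..real N} x) = ennreal (F x)"
        by (auto simp: eventually_sequentially indicator_def intro!: exI[of _ N0])
    qed
  qed (auto simp: F_def psi_def)
  have limG: "(\<lambda>N. \<integral>\<^sup>+x. ennreal (G x * indicator {exp (-real N)..exp (real N)} x) \<partial>lborel) \<longlonglongrightarrow> (\<integral>\<^sup>+x. ennreal (indicator {0..} x * x powr h / exp x) \<partial>lborel)"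
  proof (rule nn_integral_LIMSEQ)
    show "incseq (\<lambda>N x. ennreal (G x * indicator {exp (-real N)..exp (real N)} x))"
    proof (unfold incseq_def le_fun_def, intro allI impI ennreal_leI)
      fix m n :: nat and x :: real assume "m \<le> n"
      have e1: "exp (- real n) \<le> exp (- real m)" and e2: "exp (real m) \<le> exp (real n)" using \<open>m \<le> n\<close> by auto
      have "indicator {exp (-real m)..exp (real m)} x \<le> (indicator {exp (-real n)..exp (real n)} x :: real)"
        unfolding indicator_def using order_trans[OF e1] order_trans[OF _ e2] by auto
      moreover have "0 \<le> G x" unfolding G_def by simp
      ultimately show "G x * indicator {exp (-real m)..exp (real m)} x \<le> G x * indicator {exp (-real n)..exp (real n)} x"
        by (rule mult_left_mono)
    qed
    show "(\<lambda>N. ennreal (G x * indicator {exp (-real N)..exp (real N)} x)) \<longlonglongrightarrow> ennreal (indicator {0..} x * x powr h / exp x)" for x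
    proof (cases "x > 0")
      case True
      obtain N0 :: nat where N0: "\<bar>ln x\<bar> \<le> real N0" using real_arch_simple by blast
      have "exp (-real N) \<le> x \<and> x \<le> exp (real N)" if "N \<ge> N0" for N
      proof -
        have "-real N \<le> ln x" "ln x \<le> real N" using N0 that by auto
        then show ?thesis using True
          by (metis exp_le_cancel_iff exp_ln)
      qed
      then show ?thesis using True
        by (intro tendsto_eventually) (auto simp: eventually_sequentially indicator_def G_def intro!: exI[of _ N0])
    next
      case False
      then have "\<not> (exp (-real N) \<le> x)" for N
        by (metis exp_gt_zero leD le_less_trans not_le)
      then show ?thesis using False
        by (auto simp: indicator_def G_def)
    qed
  qed (auto simp: G_def)
  have "(\<integral>\<^sup>+x. ennreal (F x) \<partial>lborel) = (\<integral>\<^sup>+x. ennreal (indicator {0..} x * x powr h / exp x) \<partial>lborel)"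
    using LIMSEQ_unique[OF limF] limG sub by simp
  also have "\<dots> = ennreal (Gamma (1+h))"
    using Gamma_conv_nn_integral_real[of "1+h"] h by simp
  finally show ?thesis by (simp add: F_def)
qed

lemma psi_h_integral:
  assumes h: "h > -1"
  shows "integrable lborel (\<lambda>y. exp (h*y) * psi y)" "(\<integral>y. exp (h*y) * psi y \<partial>lborel) = Gamma (1+h)"
proof -
  have pos: "0 \<le> Gamma (1+h)" using Gamma_real_pos[of "1+h"] h by simp
  have "has_bochner_integral lborel (\<lambda>y. exp (h*y) * psi y) (Gamma (1+h))"
    by (rule has_bochner_integral_nn_integral) (simp_all add: psi_nonneg psi_h_nn_eq[OF h] pos, simp add: psi_def)
  then show "integrable lborel (\<lambda>y. exp (h*y) * psi y)" "(\<integral>y. exp (h*y) * psi y \<partial>lborel) = Gamma (1+h)"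
    by (auto simp: has_bochner_integral_iff)
qed

lemma psi_integral: "integrable lborel psi" "(\<integral>y. psi y \<partial>lborel) = 1"
  using psi_h_integral[of 0] by (simp_all add: Gamma_1)

lemma abs_le_exp_half: "\<bar>y::real\<bar> \<le> 2 * (exp (y/2) + exp (-y/2))"
proof -
  define z where "z = \<bar>y\<bar>"
  define e where "e = exp (z/2)"
  define s where "s = exp (y/2) + exp (-y/2)"
  have a: "z/2 \<le> e" using exp_ge_add_one_self[of "z/2"] unfolding e_def by linarith
  have b: "e \<le> s" unfolding s_def e_def z_def
    by (cases "y \<ge> 0") auto
  from a b have "z \<le> 2 * s" by linarith
  then show ?thesis by (simp add: z_def s_def)
qed

lemma psi_mean_integrable: "integrable lborel (\<lambda>y. y * psi y)"
proof (rule Bochner_Integration.integrable_bound)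
  show "integrable lborel (\<lambda>y. 2 * (exp ((1/2)*y) * psi y + exp ((-1/2)*y) * psi y))"
    using psi_h_integral(1)[of "1/2"] psi_h_integral(1)[of "-1/2"] by auto
  show "AE y in lborel. norm (y * psi y) \<le> norm (2 * (exp ((1/2)*y) * psi y + exp ((-1/2)*y) * psi y))"
  proof (intro AE_I2)
    fix y :: real
    have "\<bar>y\<bar> * psi y \<le> 2 * (exp (y/2) + exp (-y/2)) * psi y"
      by (rule mult_right_mono[OF abs_le_exp_half psi_nonneg])
    then show "norm (y * psi y) \<le> norm (2 * (exp ((1/2)*y) * psi y + exp ((-1/2)*y) * psi y))"
      using psi_nonneg[of y] by (simp add: abs_mult algebra_simps)
  qed
qed (auto simp: psi_def)

lemma psi_mean: "(\<integral>y. y * psi y \<partial>lborel) = - euler_mascheroni"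
proof -
  let ?I = "\<integral>y. y * psi y \<partial>lborel"
  define q where "q = (\<lambda>h::real. (Gamma (1 + h) - Gamma 1) / h)"
  have D: "(q \<longlongrightarrow> - euler_mascheroni) (at 0)"
  proof -
    have "DERIV Gamma (1::real) :> Gamma 1 * Digamma 1"
      by (rule has_field_derivative_Gamma) (auto simp: nonpos_Ints_def)
    then have "DERIV Gamma (1::real) :> - euler_mascheroni" by (simp add: Gamma_1)
    then show ?thesis unfolding DERIV_def q_def by (simp add: add.commute)
  qed
  have key: "(\<integral>y. ((exp (h*y) - 1)/h) * psi y \<partial>lborel) = q h" if "h > -1" "h \<noteq> 0" for h
  proof -
    have "(\<integral>y. ((exp (h*y) - 1)/h) * psi y \<partial>lborel) = (\<integral>y. (exp (h*y) * psi y - psi y)/h \<partial>lborel)"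
      by (intro Bochner_Integration.integral_cong) (auto simp: field_simps)
    also have "\<dots> = ((\<integral>y. exp (h*y) * psi y \<partial>lborel) - (\<integral>y. psi y \<partial>lborel)) / h"
      using psi_h_integral(1)[OF that(1)] psi_integral(1) by simp
    also have "\<dots> = q h" using psi_h_integral(2)[OF that(1)] psi_integral(2) by (simp add: q_def Gamma_1)
    finally show ?thesis .
  qed
  have int_h: "integrable lborel (\<lambda>y. ((exp (h*y) - 1)/h) * psi y)" if "h > -1" for h
  proof -
    have "integrable lborel (\<lambda>y. (exp (h*y) * psi y - psi y)/h)"
      using psi_h_integral(1)[OF that] psi_integral(1) by simp
    then show ?thesis by (rule Bochner_Integration.integrable_cong[THEN iffD1, rotated 2]) (auto simp: field_simps)
  qed
  have up: "?I \<le> q h" if "h > 0" for h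
  proof -
    have "?I \<le> (\<integral>y. ((exp (h*y) - 1)/h) * psi y \<partial>lborel)"
    proof (rule integral_mono[OF psi_mean_integrable int_h])
      fix y :: real
      have "y \<le> (exp (h*y) - 1)/h" using exp_ge_add_one_self[of "h*y"] that by (simp add: field_simps)
      then show "y * psi y \<le> ((exp (h*y) - 1)/h) * psi y" by (rule mult_right_mono[OF _ psi_nonneg])
    qed (use that in auto)
    then show ?thesis using key[of h] that by simp
  qed
  have low: "q h \<le> ?I" if "h < 0" "h > -1" for h
  proof -
    have "(\<integral>y. ((exp (h*y) - 1)/h) * psi y \<partial>lborel) \<le> ?I"
    proof (rule integral_mono[OF int_h psi_mean_integrable])
      fix y :: real
      have "h*y \<le> exp (h*y) - 1" using exp_ge_add_one_self[of "h*y"] by linarith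
      then have "(exp (h*y) - 1)/h \<le> y" using that
        by (simp add: divide_le_eq mult.commute)
      then show "((exp (h*y) - 1)/h) * psi y \<le> y * psi y" by (rule mult_right_mono[OF _ psi_nonneg])
    qed (use that in auto)
    then show ?thesis using key[of h] that by simp
  qed
  have "?I \<le> - euler_mascheroni"
  proof (rule tendsto_lowerbound[of q])
    show "(q \<longlongrightarrow> - euler_mascheroni) (at_right 0)" using D by (rule tendsto_within_subset) auto
    show "\<forall>\<^sub>F h in at_right 0. ?I \<le> q h"
      using eventually_at_right_less[of 0] by eventually_elim (rule up)
  qed simp
  moreover have "- euler_mascheroni \<le> ?I"
  proof (rule tendsto_upperbound[of q])
    show "(q \<longlongrightarrow> - euler_mascheroni) (at_left 0)" using D by (rule tendsto_within_subset) auto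
    have "\<forall>\<^sub>F h in at_left 0. h < 0 \<and> h > (-1::real)"
      unfolding eventually_at_left_field by (intro exI[of _ "-1"]) auto
    then show "\<forall>\<^sub>F h in at_left 0. q h \<le> ?I"
      by eventually_elim (auto intro: low)
  qed simp
  ultimately show ?thesis by linarith
qed

lemma psi_tail: "(\<integral>y. indicator {c<..} y * psi y \<partial>lborel) = exp (- exp c)"
proof -
  have "(LBINT y=ereal c..\<infinity>. psi y) = 0 - (- exp (- exp c))"
  proof (rule interval_integral_FTC_nonneg)
    show "\<And>x. ereal c < ereal x \<Longrightarrow> ereal x < \<infinity> \<Longrightarrow> DERIV (\<lambda>y. - exp (- exp y)) x :> psi x"
      by (auto intro!: derivative_eq_intros simp: psi_def)
    show "(((\<lambda>y. - exp (- exp y)) \<circ> real_of_ereal) \<longlongrightarrow> - exp (- exp c)) (at_right (ereal c))"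
      by (auto simp: ereal_tendsto_simps intro!: tendsto_eq_intros)
    have *: "((\<lambda>y::real. - exp (- exp y)) \<longlongrightarrow> 0) at_top"
      by (rule tendsto_eq_intros exp_at_bot[THEN filterlim_compose] | simp add: filterlim_uminus_at_bot exp_at_top)+
    show "(((\<lambda>y. - exp (- exp y)) \<circ> real_of_ereal) \<longlongrightarrow> 0) (at_left \<infinity>)"
      unfolding ereal_tendsto_simps using * .
  qed (auto simp: psi_def intro!: continuous_intros)
  then show ?thesis
    by (simp add: interval_integral_Ioi set_lebesgue_integral_def)
qed

definition gd :: "real \<Rightarrow> real \<Rightarrow> real" where
  "gd b t = (1 / b) * exp (- (t + b * euler_mascheroni) / b) * exp (- exp (- (t + b * euler_mascheroni) / b))"

lemma gumbel_gd: "gumbel b = density lborel (\<lambda>t. ennreal (gd b t))"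
  unfolding gumbel_def gd_def ..

lemma gd_nonneg: "b > 0 \<Longrightarrow> 0 \<le> gd b t" by (simp add: gd_def)

lemma gd_measurable[measurable]: "gd b \<in> borel_measurable borel"
  unfolding gd_def by measurable

lemma gd_affine: "b > 0 \<Longrightarrow> gd b (- b * euler_mascheroni + (- b) * y) = psi y / b"
  by (simp add: gd_def psi_def field_simps)

lemma psi_measurable[measurable]: "psi \<in> borel_measurable borel"
  unfolding psi_def by measurable

lemma gumbel_integral:
  fixes g :: "real \<Rightarrow> real"
  assumes b: "b > 0" and [measurable]: "g \<in> borel_measurable borel"
  shows "integral\<^sup>L (gumbel b) g = (\<integral>y. psi y * g (- b * euler_mascheroni - b * y) \<partial>lborel)"
proof -
  have "integral\<^sup>L (gumbel b) g = (\<integral>t. gd b t * g t \<partial>lborel)"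
    unfolding gumbel_gd by (subst integral_density) (auto simp: gd_nonneg b)
  also have "\<dots> = \<bar>- b\<bar> *\<^sub>R (\<integral>y. gd b (- b * euler_mascheroni + (- b) * y) * g (- b * euler_mascheroni + (- b) * y) \<partial>lborel)"
    by (rule lborel_integral_real_affine) (use b in simp)
  also have "\<dots> = (\<integral>y. psi y * g (- b * euler_mascheroni - b * y) \<partial>lborel)"
    using b by (simp only: gd_affine) simp
  finally show ?thesis .
qed

lemma gumbel_integrable:
  fixes g :: "real \<Rightarrow> real"
  assumes b: "b > 0" and [measurable]: "g \<in> borel_measurable borel"
  shows "integrable (gumbel b) g \<longleftrightarrow> integrable lborel (\<lambda>y. psi y * g (- b * euler_mascheroni - b * y))"
proof -
  have "integrable (gumbel b) g \<longleftrightarrow> integrable lborel (\<lambda>t. gd b t * g t)"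
    unfolding gumbel_gd by (subst integrable_density) (auto simp: gd_nonneg b)
  also have "\<dots> \<longleftrightarrow> integrable lborel (\<lambda>y. gd b (- b * euler_mascheroni + (- b) * y) * g (- b * euler_mascheroni + (- b) * y))"
    by (rule lborel_integrable_real_affine_iff[symmetric]) (use b in simp)
  also have "\<dots> \<longleftrightarrow> integrable lborel (\<lambda>y. (1/b) * (psi y * g (- b * euler_mascheroni - b * y)))"
    using b by (simp only: gd_affine) (intro arg_cong[where f="integrable lborel"] ext, simp)
  also have "\<dots> \<longleftrightarrow> integrable lborel (\<lambda>y. psi y * g (- b * euler_mascheroni - b * y))"
    using b by (subst integrable_mult_left_iff) simp
  finally show ?thesis .
qed

lemma prob_space_gumbel: assumes b: "b > 0" shows "prob_space (gumbel b)"
proof (rule prob_spaceI)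
  have "emeasure (gumbel b) (space (gumbel b)) = (\<integral>\<^sup>+t. ennreal (gd b t) \<partial>lborel)"
    unfolding gumbel_gd by (subst emeasure_density) auto
  also have "\<dots> = ennreal \<bar>- b\<bar> * (\<integral>\<^sup>+y. ennreal (gd b (- b * euler_mascheroni + (- b) * y)) \<partial>lborel)"
    by (rule nn_integral_real_affine) (use b in auto)
  also have "\<dots> = ennreal b * (\<integral>\<^sup>+y. ennreal (1/b) * ennreal (psi y) \<partial>lborel)"
    using b by (simp only: gd_affine) (simp add: ennreal_mult'[symmetric] divide_inverse mult.commute)
  also have "\<dots> = ennreal b * (ennreal (1/b) * (\<integral>\<^sup>+y. ennreal (psi y) \<partial>lborel))"
    by (subst nn_integral_cmult) (auto simp: psi_def)
  also have "(\<integral>\<^sup>+y. ennreal (psi y) \<partial>lborel) = 1"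
    using psi_h_nn_eq[of 0] by (simp add: Gamma_1)
  finally show "emeasure (gumbel b) (space (gumbel b)) = 1"
    using b by (simp add: ennreal_mult'[symmetric])
qed

definition Fg :: "real \<Rightarrow> real \<Rightarrow> real" where
  "Fg b z = exp (- exp (- (z + b * euler_mascheroni) / b))"

lemma gumbel_cdf_less:
  assumes b: "b > 0"
  shows "(\<integral>x. indicator {..<z} x \<partial>gumbel b) = Fg b z"
proof -
  have "(\<integral>x. indicator {..<z} x \<partial>gumbel b) = (\<integral>y. psi y * indicator {..<z} (- b * euler_mascheroni - b * y) \<partial>lborel)"
    by (rule gumbel_integral[OF b]) simp
  also have "\<dots> = (\<integral>y. indicator {- (z + b * euler_mascheroni) / b <..} y * psi y \<partial>lborel)"
    using b by (intro Bochner_Integration.integral_cong) (auto simp: indicator_def field_simps)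
  also have "\<dots> = Fg b z" by (simp add: psi_tail Fg_def)
  finally show ?thesis .
qed

lemma gumbel_cdf_le:
  assumes b: "b > 0"
  shows "(\<integral>x. indicator {..z} x \<partial>gumbel b) = Fg b z"
proof -
  have "(\<integral>x. indicator {..z} x \<partial>gumbel b) = (\<integral>y. psi y * indicator {..z} (- b * euler_mascheroni - b * y) \<partial>lborel)"
    by (rule gumbel_integral[OF b]) simp
  also have "\<dots> = (\<integral>y. indicator {- (z + b * euler_mascheroni) / b <..} y * psi y \<partial>lborel)"
  proof (rule integral_cong_AE)
    show "AE y in lborel. psi y * indicator {..z} (- b * euler_mascheroni - b * y) = indicator {- (z + b * euler_mascheroni) / b <..} y * psi y"
      using AE_lborel_singleton[of "- (z + b * euler_mascheroni) / b"]
    proof eventually_elim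
      case (elim y)
      then show ?case using b by (auto simp: indicator_def field_simps)
    qed
  qed measurable
  also have "\<dots> = Fg b z" by (simp add: psi_tail Fg_def)
  finally show ?thesis .
qed

lemma gumbel_mean:
  assumes b: "b > 0"
  shows "integrable (gumbel b) (\<lambda>t. t)" "(\<integral>t. t \<partial>gumbel b) = 0"
proof -
  have eq: "psi y * (- b * euler_mascheroni - b * y) = (- b * euler_mascheroni) * psi y + (- b) * (y * psi y)" for y
    by (auto simp: field_simps)
  have i: "integrable lborel (\<lambda>y. (- b * euler_mascheroni) * psi y + (- b) * (y * psi y))"
    using psi_integral psi_mean_integrable by simp
  have "integrable (gumbel b) (\<lambda>t. t) \<longleftrightarrow> integrable lborel (\<lambda>y. psi y * (- b * euler_mascheroni - b * y))"
    by (rule gumbel_integrable[OF b]) simp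
  then show "integrable (gumbel b) (\<lambda>t. t)"
    using i by (simp only: eq)
  have "(\<integral>t. t \<partial>gumbel b) = (\<integral>y. psi y * (- b * euler_mascheroni - b * y) \<partial>lborel)"
    by (rule gumbel_integral[OF b]) simp
  also have "\<dots> = (\<integral>y. (- b * euler_mascheroni) * psi y + (- b) * (y * psi y) \<partial>lborel)"
    by (simp only: eq)
  also have "\<dots> = 0"
    using psi_integral psi_mean_integrable by (simp add: psi_mean)
  finally show "(\<integral>t. t \<partial>gumbel b) = 0" .
qed

lemma key_integral:
  assumes b: "b > 0" and A: "A \<ge> 0"
  shows "integrable (gumbel b) (\<lambda>t. (v + t) * exp (- A * exp (- (t + b * euler_mascheroni) / b)))"
    and "(\<integral>t. (v + t) * exp (- A * exp (- (t + b * euler_mascheroni) / b)) \<partial>gumbel b) = (v + b * ln (1 + A)) / (1 + A)"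
proof -
  define B where "B = 1 + A"
  have B: "B > 0" using A by (simp add: B_def)
  define H where "H = (\<lambda>y. psi y * ((v + (- b * euler_mascheroni - b * y)) * exp (- A * exp (- ((- b * euler_mascheroni - b * y) + b * euler_mascheroni) / b))))"
  define c where "c = v - b * euler_mascheroni + b * ln B"
  have H1: "H y = exp y * exp (- B * exp y) * (v - b * euler_mascheroni - b * y)" for y
    using b by (simp add: H_def psi_def B_def field_simps mult_exp_exp)
  have H2: "H (- ln B + 1 * y) = (c / B) * psi y + (- b / B) * (y * psi y)" for y
  proof -
    have e: "exp (y - ln B) = exp y / B" using B by (simp add: exp_diff)
    show ?thesis unfolding H1 using B by (simp add: e psi_def c_def field_simps)
  qed
  have meas: "(\<lambda>t. (v + t) * exp (- A * exp (- (t + b * euler_mascheroni) / b))) \<in> borel_measurable borel"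
    by measurable
  have i2: "integrable lborel (\<lambda>y. (c / B) * psi y + (- b / B) * (y * psi y))"
    using psi_integral psi_mean_integrable by simp
  have "integrable lborel (\<lambda>y. H (- ln B + 1 * y))" unfolding H2 by (rule i2)
  then have iH: "integrable lborel H"
    by (subst (asm) lborel_integrable_real_affine_iff) auto
  show "integrable (gumbel b) (\<lambda>t. (v + t) * exp (- A * exp (- (t + b * euler_mascheroni) / b)))"
    using iH by (subst gumbel_integrable[OF b meas]) (simp add: H_def)
  have "(\<integral>t. (v + t) * exp (- A * exp (- (t + b * euler_mascheroni) / b)) \<partial>gumbel b) = integral\<^sup>L lborel H"
    by (subst gumbel_integral[OF b meas]) (simp add: H_def)
  also have "\<dots> = \<bar>1\<bar> *\<^sub>R (\<integral>y. H (- ln B + 1 * y) \<partial>lborel)"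
    by (rule lborel_integral_real_affine) simp
  also have "\<dots> = (\<integral>y. (c / B) * psi y + (- b / B) * (y * psi y) \<partial>lborel)"
    unfolding H2 by simp
  also have "\<dots> = c / B + (- b / B) * (- euler_mascheroni)"
    using psi_integral psi_mean_integrable by (simp add: psi_mean)
  also have "\<dots> = (v + b * ln (1 + A)) / (1 + A)"
  proof -
    have "c / B + (- b / B) * (- euler_mascheroni) = (c + b * euler_mascheroni) / B"
      using B by (simp add: field_simps)
    then show ?thesis by (simp add: c_def B_def)
  qed
  finally show "(\<integral>t. (v + t) * exp (- A * exp (- (t + b * euler_mascheroni) / b)) \<partial>gumbel b) = (v + b * ln (1 + A)) / (1 + A)" .
qed

lemma sets_gumbel[measurable_cong]: "sets (gumbel b) = sets borel" by (simp add: gumbel_def)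

lemma meas_gumbel_iff: "f \<in> borel_measurable (gumbel b) \<longleftrightarrow> f \<in> borel_measurable borel"
  by (simp add: measurable_cong_sets[OF sets_gumbel refl])

definition ind :: "bool \<Rightarrow> real \<Rightarrow> real \<Rightarrow> real" where
  "ind s c x = (if (if s then x < c else x \<le> c) then 1 else 0)"

lemma ind_bounds: "0 \<le> ind s c x" "ind s c x \<le> 1" by (auto simp: ind_def)

lemma ind_measurable[measurable]:
  assumes [measurable]: "f \<in> borel_measurable M" "g \<in> borel_measurable M"
  shows "(\<lambda>w. ind s (f w) (g w)) \<in> borel_measurable M"
  unfolding ind_def by (cases s) simp_all

lemma gumbel_ind:
  assumes b: "b > 0"
  shows "(\<integral>x. ind s c x \<partial>gumbel b) = Fg b c"
proof (cases s)
  case True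
  have "(\<integral>x. ind s c x \<partial>gumbel b) = (\<integral>x. indicator {..<c} x \<partial>gumbel b)"
    by (intro Bochner_Integration.integral_cong) (auto simp: ind_def True indicator_def)
  then show ?thesis using gumbel_cdf_less[OF b] by simp
next
  case False
  have "(\<integral>x. ind s c x \<partial>gumbel b) = (\<integral>x. indicator {..c} x \<partial>gumbel b)"
    by (intro Bochner_Integration.integral_cong) (auto simp: ind_def False indicator_def)
  then show ?thesis using gumbel_cdf_le[OF b] by simp
qed

lemma noise_split:
  fixes \<phi> :: "real \<Rightarrow> real" and a :: "nat \<Rightarrow> real" and st :: "nat \<Rightarrow> bool"
  assumes b: "b > 0" and iT: "i \<in> T" and Tn: "T \<subseteq> {..<n}"
    and phi_int: "integrable (gumbel b) \<phi>" and phi_meas[measurable]: "\<phi> \<in> borel_measurable borel"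
  shows "integrable (noise n b) (\<lambda>\<omega>. \<phi> (\<omega> i) * (\<Prod>k\<in>T-{i}. ind (st k) (\<omega> i + a k) (\<omega> k)))"
    and "(\<integral>\<omega>. \<phi> (\<omega> i) * (\<Prod>k\<in>T-{i}. ind (st k) (\<omega> i + a k) (\<omega> k)) \<partial>noise n b)
          = (\<integral>t. \<phi> t * (\<Prod>k\<in>T-{i}. Fg b (t + a k)) \<partial>gumbel b)"
proof -
  interpret P: product_prob_space "\<lambda>_::nat. gumbel b"
    by (rule product_prob_spaceI) (rule prob_space_gumbel[OF b])
  have finG: "finite_measure (gumbel b)" using prob_space_gumbel[OF b] by (simp add: prob_space_def)
  define J where "J = {..<n} - {i}"
  have in_: "i < n" using iT Tn by auto
  have UJ: "{..<n} = {i} \<union> J" and dis: "{i} \<inter> J = {}" and finJ: "finite J"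
    using in_ by (auto simp: J_def)
  have JT: "J \<inter> T = T - {i}" using Tn by (auto simp: J_def)
  define g where "g = (\<lambda>k x t. if k \<in> T then ind (st k) (t + a k) x else 1)"
  have g_bounds: "0 \<le> g k x t" "g k x t \<le> 1" for k x t by (auto simp: g_def ind_bounds)
  define f where "f = (\<lambda>\<omega>::nat \<Rightarrow> real. \<phi> (\<omega> i) * (\<Prod>k\<in>J. g k (\<omega> k) (\<omega> i)))"
  have f_eq: "f \<omega> = \<phi> (\<omega> i) * (\<Prod>k\<in>T-{i}. ind (st k) (\<omega> i + a k) (\<omega> k))" for \<omega>
  proof -
    have "(\<Prod>k\<in>J. g k (\<omega> k) (\<omega> i)) = (\<Prod>k\<in>J \<inter> T. ind (st k) (\<omega> i + a k) (\<omega> k))"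
      using finJ by (simp add: prod.inter_restrict g_def)
    then show ?thesis by (simp add: f_def JT)
  qed
  have noise_eq: "noise n b = Pi\<^sub>M ({i} \<union> J) (\<lambda>_. gumbel b)"
    unfolding noise_def UJ[symmetric] ..
  have f_meas[measurable]: "f \<in> borel_measurable (Pi\<^sub>M X (\<lambda>_. gumbel b))" if "i \<in> X" "J \<subseteq> X" for X
  proof -
    have sg: "sets (gumbel b) = sets borel" by (simp add: gumbel_def)
    have comp[measurable]: "(\<lambda>\<omega>. \<omega> k) \<in> borel_measurable (Pi\<^sub>M X (\<lambda>_. gumbel b))" if "k \<in> X" for k
      by (subst measurable_cong_sets[OF refl sg[symmetric]]) (rule measurable_component_singleton[OF that])
    have [measurable]: "(\<lambda>\<omega>. g k (\<omega> k) (\<omega> i)) \<in> borel_measurable (Pi\<^sub>M X (\<lambda>_. gumbel b))" if "k \<in> J" for k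
      using that \<open>i \<in> X\<close> \<open>J \<subseteq> X\<close> unfolding g_def
      by (cases "k \<in> T") (auto intro!: ind_measurable borel_measurable_add comp)
    show ?thesis unfolding f_def using \<open>i \<in> X\<close> by measurable
  qed
  have phi_i_int: "integrable (Pi\<^sub>M X (\<lambda>_. gumbel b)) (\<lambda>\<omega>. \<phi> (\<omega> i))" if "i \<in> X" for X
  proof -
    have "integrable (distr (Pi\<^sub>M X (\<lambda>_. gumbel b)) (gumbel b) (\<lambda>\<omega>. \<omega> i)) \<phi>"
      using phi_int that distr_PiM_component[of X "\<lambda>_. gumbel b" i] prob_space_gumbel[OF b] by simp
    then show ?thesis using that by (subst (asm) integrable_distr_eq) (auto simp: meas_gumbel_iff)
  qed
  have f_int: "integrable (noise n b) f"
    unfolding noise_def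
  proof (rule Bochner_Integration.integrable_bound[OF phi_i_int[of "{..<n}"]])
    show "AE \<omega> in Pi\<^sub>M {..<n} (\<lambda>_. gumbel b). norm (f \<omega>) \<le> norm (\<phi> (\<omega> i))"
    proof (intro AE_I2)
      fix \<omega> :: "nat \<Rightarrow> real"
      have "\<bar>\<Prod>k\<in>J. g k (\<omega> k) (\<omega> i)\<bar> \<le> 1"
        by (simp add: abs_prod g_bounds prod_le_1)
      then show "norm (f \<omega>) \<le> norm (\<phi> (\<omega> i))"
        by (simp add: f_def abs_mult mult_left_le)
    qed
  qed (use in_ f_meas[of "{..<n}"] in \<open>auto simp: noise_def J_def\<close>)
  show "integrable (noise n b) (\<lambda>\<omega>. \<phi> (\<omega> i) * (\<Prod>k\<in>T-{i}. ind (st k) (\<omega> i + a k) (\<omega> k)))"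
    using f_int by (simp add: f_eq[symmetric] f_def[symmetric])
  have inner: "(\<integral>y. f (merge {i} J (x, y)) \<partial>Pi\<^sub>M J (\<lambda>_. gumbel b)) = \<phi> (x i) * (\<Prod>k\<in>T-{i}. Fg b (x i + a k))" for x
  proof -
    have m: "f (merge {i} J (x, y)) = \<phi> (x i) * (\<Prod>k\<in>J. g k (y k) (x i))" for y
      unfolding f_def using dis by (auto simp: merge_def intro!: prod.cong)
    have "(\<integral>y. (\<Prod>k\<in>J. g k (y k) (x i)) \<partial>Pi\<^sub>M J (\<lambda>_. gumbel b)) = (\<Prod>k\<in>J. (\<integral>z. g k z (x i) \<partial>gumbel b))"
    proof (rule P.product_integral_prod[OF finJ])
      fix k assume "k \<in> J"
      show "integrable (gumbel b) (\<lambda>z. g k z (x i))"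
        by (rule finite_measure.integrable_const_bound[OF finG, where B=1])
           (auto simp: g_bounds g_def meas_gumbel_iff ind_def intro!: AE_I2)
    qed
    also have "\<dots> = (\<Prod>k\<in>J. if k \<in> T then Fg b (x i + a k) else 1)"
      by (intro prod.cong) (auto simp: g_def gumbel_ind[OF b] prob_space.prob_space[OF prob_space_gumbel[OF b]])
    also have "\<dots> = (\<Prod>k\<in>T-{i}. Fg b (x i + a k))"
      using finJ by (simp add: prod.inter_restrict[symmetric] JT)
    finally show ?thesis by (simp add: m)
  qed
  have "(\<integral>\<omega>. \<phi> (\<omega> i) * (\<Prod>k\<in>T-{i}. ind (st k) (\<omega> i + a k) (\<omega> k)) \<partial>noise n b) = integral\<^sup>L (noise n b) f"
    by (rule Bochner_Integration.integral_cong[OF refl]) (simp add: f_eq)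
  also have "\<dots> = (\<integral>x. (\<integral>y. f (merge {i} J (x, y)) \<partial>Pi\<^sub>M J (\<lambda>_. gumbel b)) \<partial>Pi\<^sub>M {i} (\<lambda>_. gumbel b))"
    unfolding noise_eq by (rule P.product_integral_fold[OF dis]) (use finJ f_int noise_eq in auto)
  also have "\<dots> = (\<integral>x. \<phi> (x i) * (\<Prod>k\<in>T-{i}. Fg b (x i + a k)) \<partial>Pi\<^sub>M {i} (\<lambda>_. gumbel b))"
    by (simp add: inner)
  also have "\<dots> = (\<integral>t. \<phi> t * (\<Prod>k\<in>T-{i}. Fg b (t + a k)) \<partial>gumbel b)"
    by (rule P.product_integral_singleton) (simp add: Fg_def)
  finally show "(\<integral>\<omega>. \<phi> (\<omega> i) * (\<Prod>k\<in>T-{i}. ind (st k) (\<omega> i + a k) (\<omega> k)) \<partial>noise n b)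
          = (\<integral>t. \<phi> t * (\<Prod>k\<in>T-{i}. Fg b (t + a k)) \<partial>gumbel b)" .
qed

lemma prod_ind01:
  assumes "finite S"
  shows "(\<Prod>k\<in>S. ind (s k) (c k) (x k)) = (if \<forall>k\<in>S. (if s k then x k < c k else x k \<le> c k) then 1 else 0)"
  using assms by (induction S rule: finite_induct) (auto simp: ind_def)

lemma ind_shift: "ind s (e i + (v i - v k)) (e k) = ind s (v i + e i) (v k + e k)"
  by (cases s) (auto simp: ind_def)

lemma Fg_prod:
  assumes b: "b > 0" and fin: "finite S"
  shows "(\<Prod>k\<in>S. Fg b (t + a k)) = exp (- (\<Sum>k\<in>S. exp (- a k / b)) * exp (- (t + b * euler_mascheroni) / b))"
proof -
  have "(\<Prod>k\<in>S. Fg b (t + a k)) = (\<Prod>k\<in>S. exp (- (exp (- a k / b) * exp (- (t + b * euler_mascheroni) / b))))"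
  proof (intro prod.cong refl)
    fix k
    have "- (t + a k + b * euler_mascheroni) / b = - a k / b + - (t + b * euler_mascheroni) / b"
      using b by (simp add: field_simps)
    then show "Fg b (t + a k) = exp (- (exp (- a k / b) * exp (- (t + b * euler_mascheroni) / b)))"
      unfolding Fg_def by (simp only: exp_add)
  qed
  also have "\<dots> = exp (\<Sum>k\<in>S. - (exp (- a k / b) * exp (- (t + b * euler_mascheroni) / b)))"
    using fin by (simp add: exp_sum)
  also have "\<dots> = exp (- (\<Sum>k\<in>S. exp (- a k / b)) * exp (- (t + b * euler_mascheroni) / b))"
    by (simp add: sum_negf sum_distrib_right)
  finally show ?thesis .
qed

lemma term_integral:
  fixes v :: "nat \<Rightarrow> real" and st :: "nat \<Rightarrow> bool"
  assumes b: "b > 0" and iT: "i \<in> T" and Tn: "T \<subseteq> {..<n}"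
  defines "Z \<equiv> (\<Sum>k\<in>T. exp (v k / b))"
  shows "integrable (noise n b) (\<lambda>\<omega>. (v i + \<omega> i) * (\<Prod>k\<in>T-{i}. ind (st k) (\<omega> i + (v i - v k)) (\<omega> k)))"
    and "(\<integral>\<omega>. (v i + \<omega> i) * (\<Prod>k\<in>T-{i}. ind (st k) (\<omega> i + (v i - v k)) (\<omega> k)) \<partial>noise n b)
          = exp (v i / b) / Z * (b * ln Z)"
proof -
  have finT: "finite T" using Tn finite_subset by blast
  have phi_int: "integrable (gumbel b) (\<lambda>t. v i + t)"
  proof -
    have "finite_measure (gumbel b)" using prob_space_gumbel[OF b] by (simp add: prob_space_def)
    then show ?thesis using gumbel_mean(1)[OF b] by (simp add: finite_measure.integrable_const)
  qed
  show "integrable (noise n b) (\<lambda>\<omega>. (v i + \<omega> i) * (\<Prod>k\<in>T-{i}. ind (st k) (\<omega> i + (v i - v k)) (\<omega> k)))"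
    by (rule noise_split(1)[OF b iT Tn phi_int]) simp
  define A where "A = (\<Sum>k\<in>T-{i}. exp (- (v i - v k) / b))"
  have A0: "A \<ge> 0" unfolding A_def by (simp add: sum_nonneg)
  have "(\<integral>\<omega>. (v i + \<omega> i) * (\<Prod>k\<in>T-{i}. ind (st k) (\<omega> i + (v i - v k)) (\<omega> k)) \<partial>noise n b)
        = (\<integral>t. (v i + t) * (\<Prod>k\<in>T-{i}. Fg b (t + (v i - v k))) \<partial>gumbel b)"
    by (rule noise_split(2)[OF b iT Tn phi_int]) simp
  also have "\<dots> = (\<integral>t. (v i + t) * exp (- A * exp (- (t + b * euler_mascheroni) / b)) \<partial>gumbel b)"
    using finT by (simp add: Fg_prod[OF b] A_def)
  also have "\<dots> = (v i + b * ln (1 + A)) / (1 + A)"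
    by (rule key_integral(2)[OF b A0])
  also have "\<dots> = exp (v i / b) / Z * (b * ln Z)"
  proof -
    have "1 + A = (\<Sum>k\<in>T. exp ((v k - v i) / b))"
    proof -
      have "(\<Sum>k\<in>T. exp ((v k - v i) / b)) = exp ((v i - v i) / b) + (\<Sum>k\<in>T-{i}. exp ((v k - v i) / b))"
        using finT iT by (simp add: sum.remove)
      moreover have "exp (- (v i - v k) / b) = exp ((v k - v i) / b)" for k by simp
      ultimately show ?thesis unfolding A_def by simp
    qed
    also have "\<dots> = Z * exp (- v i / b)"
      unfolding Z_def sum_distrib_right
      by (intro sum.cong refl) (simp add: exp_add[symmetric] diff_divide_distrib)
    finally have AZ: "1 + A = Z * exp (- v i / b)" .
    have Zpos: "Z > 0" unfolding Z_def using finT iT by (intro sum_pos) auto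
    have "ln (1 + A) = ln Z - v i / b" using Zpos by (simp add: AZ ln_mult)
    then have "v i + b * ln (1 + A) = b * ln Z" using b by (simp add: field_simps)
    moreover have "1 / (1 + A) = exp (v i / b) / Z" unfolding AZ using Zpos by (simp add: exp_minus field_simps)
    ultimately show ?thesis by (simp add: divide_inverse mult.commute)
  qed
  finally show "(\<integral>\<omega>. (v i + \<omega> i) * (\<Prod>k\<in>T-{i}. ind (st k) (\<omega> i + (v i - v k)) (\<omega> k)) \<partial>noise n b)
          = exp (v i / b) / Z * (b * ln Z)" .
qed

lemma Max_decomp:
  fixes w :: "nat \<Rightarrow> real"
  assumes fin: "finite T" and ne: "T \<noteq> {}"
  shows "Max (w ` T) = (\<Sum>i\<in>T. w i * (if \<forall>k\<in>T-{i}. (if k < i then w k < w i else w k \<le> w i) then 1 else 0))"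
proof -
  define M where "M = Max (w ` T)"
  define S where "S = {i\<in>T. w i = M}"
  have M_in: "M \<in> w ` T" unfolding M_def using fin ne by simp
  have M_ge: "w k \<le> M" if "k \<in> T" for k unfolding M_def using fin that by simp
  have Sne: "S \<noteq> {}" and finS: "finite S" using M_in fin by (auto simp: S_def)
  define i0 where "i0 = Min S"
  have i0S: "i0 \<in> S" unfolding i0_def using Sne finS by simp
  have i0_le: "i0 \<le> j" if "j \<in> S" for j unfolding i0_def using finS that by simp
  have i0T: "i0 \<in> T" and wi0: "w i0 = M" using i0S by (auto simp: S_def)
  define P where "P = (\<lambda>i. \<forall>k\<in>T-{i}. (if k < i then w k < w i else w k \<le> w i))"
  have P0: "P i0"
    unfolding P_def
  proof (intro ballI)
    fix k assume k: "k \<in> T - {i0}"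
    show "if k < i0 then w k < w i0 else w k \<le> w i0"
    proof (cases "k < i0")
      case True
      have "w k \<noteq> M" using i0_le[of k] True k by (auto simp: S_def)
      then show ?thesis using True M_ge[of k] k wi0 by auto
    qed (use M_ge[of k] k wi0 in auto)
  qed
  have Pn: "\<not> P i" if "i \<in> T" "i \<noteq> i0" for i
  proof
    assume Pi: "P i"
    then have c: "if i0 < i then w i0 < w i else w i0 \<le> w i" unfolding P_def using i0T that by auto
    show False
    proof (cases "i0 < i")
      case True
      then show False using c M_ge[of i] that wi0 by auto
    next
      case False
      then have "w i = M" using c M_ge[of i] that wi0 by auto
      then have "i \<in> S" using that by (simp add: S_def)
      then show False using i0_le[of i] False that by auto
    qed
  qed
  have "(\<Sum>i\<in>T. w i * (if P i then 1 else 0)) = (\<Sum>i\<in>T. if i = i0 then w i0 else 0)"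
    by (intro sum.cong refl) (use P0 Pn in auto)
  also have "\<dots> = w i0" using fin i0T by simp
  finally show ?thesis by (simp add: P_def M_def wi0)
qed

lemma chosen_integral:
  fixes v :: "nat \<Rightarrow> real"
  assumes b: "b > 0" and Tn: "T \<subseteq> {..<n}"
  defines "Z \<equiv> (\<Sum>k\<in>T. exp (v k / b))"
  shows "(\<integral>\<omega>. (if chosen T v \<omega> i then v i + \<omega> i else 0) \<partial>noise n b)
          = (if i \<in> T then exp (v i / b) / Z * (b * ln Z) else 0)"
proof (cases "i \<in> T")
  case False
  then show ?thesis by (simp add: chosen_def)
next
  case iT: True
  have finT: "finite T" using Tn finite_subset by blast
  have "(\<integral>\<omega>. (if chosen T v \<omega> i then v i + \<omega> i else 0) \<partial>noise n b)
     = (\<integral>\<omega>. (v i + \<omega> i) * (\<Prod>k\<in>T-{i}. ind True (\<omega> i + (v i - v k)) (\<omega> k)) \<partial>noise n b)"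
  proof (intro Bochner_Integration.integral_cong refl)
    fix \<omega> :: "nat \<Rightarrow> real"
    have "(\<Prod>k\<in>T-{i}. ind True (\<omega> i + (v i - v k)) (\<omega> k)) = (if chosen T v \<omega> i then 1 else 0)"
      using finT iT by (subst prod_ind01) (auto simp: chosen_def algebra_simps)
    then show "(if chosen T v \<omega> i then v i + \<omega> i else 0) = (v i + \<omega> i) * (\<Prod>k\<in>T-{i}. ind True (\<omega> i + (v i - v k)) (\<omega> k))"
      by simp
  qed
  also have "\<dots> = exp (v i / b) / Z * (b * ln Z)"
    unfolding Z_def by (rule term_integral(2)[OF b iT Tn])
  finally show ?thesis using iT by simp
qed

lemma Max_integral:
  fixes v :: "nat \<Rightarrow> real"
  assumes b: "b > 0" and Tn: "T \<subseteq> {..<n}" and ne: "T \<noteq> {}"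
  shows "(\<integral>\<omega>. Max ((\<lambda>k. v k + \<omega> k) ` T) \<partial>noise n b) = b * ln (\<Sum>k\<in>T. exp (v k / b))"
proof -
  define Z where "Z = (\<Sum>k\<in>T. exp (v k / b))"
  have finT: "finite T" using Tn finite_subset by blast
  have Zpos: "Z > 0" unfolding Z_def using finT ne by (intro sum_pos) auto
  define f where "f = (\<lambda>i \<omega>. (v i + \<omega> i) * (\<Prod>k\<in>T-{i}. ind (k < i) (\<omega> i + (v i - v k)) (\<omega> k)))"
  have pw: "Max ((\<lambda>k. v k + \<omega> k) ` T) = (\<Sum>i\<in>T. f i \<omega>)" for \<omega> :: "nat \<Rightarrow> real"
  proof -
    have "f i \<omega> = (v i + \<omega> i) * (if \<forall>k\<in>T-{i}. (if k < i then v k + \<omega> k < v i + \<omega> i else v k + \<omega> k \<le> v i + \<omega> i) then 1 else 0)" for i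
      unfolding f_def using finT by (subst prod_ind01) (auto simp: algebra_simps)
    then show ?thesis using Max_decomp[OF finT ne, of "\<lambda>k. v k + \<omega> k"] by simp
  qed
  have "(\<integral>\<omega>. Max ((\<lambda>k. v k + \<omega> k) ` T) \<partial>noise n b) = (\<integral>\<omega>. (\<Sum>i\<in>T. f i \<omega>) \<partial>noise n b)"
    by (simp add: pw)
  also have "\<dots> = (\<Sum>i\<in>T. (\<integral>\<omega>. f i \<omega> \<partial>noise n b))"
    by (rule Bochner_Integration.integral_sum) (unfold f_def, rule term_integral(1)[OF b _ Tn], simp)
  also have "\<dots> = (\<Sum>i\<in>T. exp (v i / b) / Z * (b * ln Z))"
    by (intro sum.cong refl) (unfold f_def Z_def, rule term_integral(2)[OF b _ Tn], simp)
  also have "\<dots> = (\<Sum>i\<in>T. exp (v i / b)) / Z * (b * ln Z)"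
    by (simp add: sum_distrib_right sum_divide_distrib)
  also have "\<dots> = b * ln Z" using Zpos by (simp add: Z_def[symmetric])
  finally show ?thesis by (simp add: Z_def)
qed

lemma perm_length: "l \<in> permutations_of_set {..<n} \<Longrightarrow> length l = n"
  using length_finite_permutations_of_set by fastforce

lemma orderings_sub: "orderings n v \<subseteq> permutations_of_set {..<n}"
  by (auto simp: orderings_def)

lemma orderings_finite: "finite (orderings n v)"
  using orderings_sub finite_permutations_of_set finite_subset by metis

lemma orderings_nonempty: "orderings n v \<noteq> {}"
proof -
  define l where "l = sort_key (\<lambda>k. - v k) [0..<n]"
  have "l \<in> orderings n v"
    unfolding orderings_def permutations_of_set_def l_def
    using sorted_sort_key[of "\<lambda>k. - v k" "[0..<n]"]
    by (auto simp: sorted_map atLeast0LessThan)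
  then show ?thesis by blast
qed

lemma orderings_cong:
  assumes "\<And>k. k < n \<Longrightarrow> v k = v' k"
  shows "orderings n v = orderings n v'"
proof -
  have "sorted_wrt (\<lambda>a b. v a \<ge> v b) l = sorted_wrt (\<lambda>a b. v' a \<ge> v' b) l"
    if "l \<in> permutations_of_set {..<n}" for l
  proof -
    have "l ! p < n" if "p < length l" for p
      using \<open>l \<in> permutations_of_set {..<n}\<close> that nth_mem by (fastforce simp: permutations_of_set_def)
    then show ?thesis by (auto simp: sorted_wrt_iff_nth_less assms)
  qed
  then show ?thesis unfolding orderings_def by blast
qed

lemma topK_cong:
  assumes "\<And>k. k < n \<Longrightarrow> v k = v' k"
  shows "topK n K v = topK n K v'"
  unfolding topK_def using orderings_cong[OF assms] by simp

lemma orderings_const: "orderings n (\<lambda>_. c) = permutations_of_set {..<n}"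
  by (auto simp: orderings_def)

lemma set_pmf_topK: "set_pmf (topK n K v) = (\<lambda>l. set (take K l)) ` orderings n v"
  unfolding topK_def using orderings_finite orderings_nonempty by simp

lemma topK_sets:
  assumes "T \<in> set_pmf (topK n K v)" and K: "K \<le> n"
  shows "T \<subseteq> {..<n}" "card T = K" "1 \<le> K \<Longrightarrow> T \<noteq> {}"
proof -
  obtain l where l: "l \<in> orderings n v" and T: "T = set (take K l)"
    using assms(1) by (auto simp: set_pmf_topK)
  have lp: "l \<in> permutations_of_set {..<n}" using l orderings_sub by blast
  then have len: "length l = n" and dl: "distinct l" and sl: "set l = {..<n}"
    by (auto simp: perm_length permutations_of_set_def)
  have "set (take K l) \<subseteq> set l" by (rule set_take_subset)
  then show "T \<subseteq> {..<n}" unfolding T sl .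
  have "distinct (take K l)" using dl by (rule distinct_take)
  then have "card (set (take K l)) = length (take K l)" by (rule distinct_card)
  then show cK: "card T = K" unfolding T using len K by simp
  show "1 \<le> K \<Longrightarrow> T \<noteq> {}" using cK by auto
qed

lemma topK_finite: "finite (set_pmf (topK n K v))"
  unfolding set_pmf_topK using orderings_finite by simp

lemma not_in_topK:
  assumes "i < n" "K < n" and low: "\<And>k. k < n \<Longrightarrow> k \<noteq> i \<Longrightarrow> v i < v k"
    and T: "T \<in> set_pmf (topK n K v)"
  shows "i \<notin> T"
proof
  assume iT: "i \<in> T"
  obtain l where l: "l \<in> orderings n v" and TT: "T = set (take K l)"
    using T by (auto simp: set_pmf_topK)
  have lp: "l \<in> permutations_of_set {..<n}" using l orderings_sub by blast
  then have len: "length l = n" and dl: "distinct l" and sl: "set l = {..<n}"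
    by (auto simp: perm_length permutations_of_set_def)
  have sw: "sorted_wrt (\<lambda>a b. v a \<ge> v b) l" using l by (simp add: orderings_def)
  obtain p where p: "p < length (take K l)" "take K l ! p = i" using iT TT by (auto simp: in_set_conv_nth)
  then have pK: "p < K" and lpi: "l ! p = i" by auto
  define q where "q = n - 1"
  have pq: "p < q" using pK assms(2) by (simp add: q_def)
  have qn: "q < n" using assms(1) by (simp add: q_def)
  have "l ! q \<noteq> l ! p" by (subst nth_eq_iff_index_eq) (use dl pq qn len in auto)
  then have ne: "l ! q \<noteq> i" using lpi by simp
  have "l ! q \<in> set l" using qn len by simp
  then have "l ! q < n" using sl by blast
  then have lt: "v i < v (l ! q)" using ne by (rule low)
  have "v (l ! p) \<ge> v (l ! q)" using sw pq qn len by (auto simp: sorted_wrt_iff_nth_less)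
  then show False using lt lpi by simp
qed

lemma in_topK:
  assumes "i < n" "1 \<le> K" and high: "\<And>k. k < n \<Longrightarrow> k \<noteq> i \<Longrightarrow> v k < v i"
    and T: "T \<in> set_pmf (topK n K v)"
  shows "i \<in> T"
proof -
  obtain l where l: "l \<in> orderings n v" and TT: "T = set (take K l)"
    using T by (auto simp: set_pmf_topK)
  have lp: "l \<in> permutations_of_set {..<n}" using l orderings_sub by blast
  then have len: "length l = n" and dl: "distinct l" and sl: "set l = {..<n}"
    by (auto simp: perm_length permutations_of_set_def)
  have sw: "sorted_wrt (\<lambda>a b. v a \<ge> v b) l" using l by (simp add: orderings_def)
  have "i \<in> set l" using sl assms(1) by simp
  then obtain p where p: "p < n" "l ! p = i" using len by (auto simp: in_set_conv_nth)
  have "p = 0"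
  proof (rule ccontr)
    assume "p \<noteq> 0"
    then have ge: "v (l ! 0) \<ge> v (l ! p)" using sw p len by (auto simp: sorted_wrt_iff_nth_less)
    have "l ! 0 \<noteq> l ! p" by (subst nth_eq_iff_index_eq) (use dl p len \<open>p \<noteq> 0\<close> in auto)
    then have ne: "l ! 0 \<noteq> i" using p by simp
    have "l ! 0 \<in> set l" using p(1) len by simp
    then have "l ! 0 < n" using sl by blast
    then have "v (l ! 0) < v i" using ne by (rule high)
    then show False using ge p(2) by simp
  qed
  have t0: "take K l ! 0 = i" using p \<open>p = 0\<close> assms(2) by simp
  have "0 < length (take K l)" using p(1) len assms(2) by simp
  then have "take K l ! 0 \<in> set (take K l)" by (rule nth_mem)
  then show ?thesis using t0 TT by simp
qed

definition sw :: "nat \<Rightarrow> nat \<Rightarrow> nat \<Rightarrow> nat" where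
  "sw i j x = (if x = i then j else if x = j then i else x)"

lemma sw_sw[simp]: "sw i j (sw i j x) = x" by (auto simp: sw_def)
lemma sw_inj: "inj (sw i j)" by (metis injI sw_sw)
lemma map_sw_sw[simp]: "map (sw i j) (map (sw i j) l) = l" by (induction l) auto
lemma sw_image: "i < n \<Longrightarrow> j < n \<Longrightarrow> sw i j ` {..<n} = {..<n}"
proof -
  assume "i < n" "j < n"
  then have sub: "sw i j ` {..<n} \<subseteq> {..<n}" by (auto simp: sw_def)
  moreover have "{..<n} \<subseteq> sw i j ` {..<n}"
  proof
    fix x assume "x \<in> {..<n}"
    then have "sw i j x \<in> {..<n}" using sub by blast
    then show "x \<in> sw i j ` {..<n}" by (metis image_eqI sw_sw)
  qed
  ultimately show ?thesis by blast
qed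

lemma count_sym:
  fixes i j n K :: nat
  assumes i: "i < n" and j: "j < n"
  shows "card {l \<in> permutations_of_set {..<n}. i \<in> set (take K l)} = card {l \<in> permutations_of_set {..<n}. j \<in> set (take K l)}"
proof -
  let ?P = "permutations_of_set {..<n}"
  have mapP: "map (sw i j) l \<in> ?P" if "l \<in> ?P" for l
    using that sw_image[OF i j] sw_inj[of i j]
    by (auto simp: permutations_of_set_def distinct_map inj_on_def)
  have memi: "i \<in> set (take K (map (sw i j) l)) \<longleftrightarrow> j \<in> set (take K l)" for l
  proof -
    have "i \<in> set (take K (map (sw i j) l)) \<longleftrightarrow> i \<in> sw i j ` set (take K l)" by (simp add: take_map)
    also have "\<dots> \<longleftrightarrow> sw i j i \<in> set (take K l)" by (metis image_eqI imageE sw_sw)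
    also have "sw i j i = j" by (simp add: sw_def)
    finally show ?thesis .
  qed
  have "map (sw i j) ` {l \<in> ?P. j \<in> set (take K l)} = {l \<in> ?P. i \<in> set (take K l)}"
  proof (intro equalityI subsetI)
    fix l assume "l \<in> map (sw i j) ` {l \<in> ?P. j \<in> set (take K l)}"
    then obtain l0 where "l = map (sw i j) l0" "l0 \<in> ?P" "j \<in> set (take K l0)" by blast
    then show "l \<in> {l \<in> ?P. i \<in> set (take K l)}" using mapP memi by auto
  next
    fix l assume l: "l \<in> {l \<in> ?P. i \<in> set (take K l)}"
    have m: "i \<in> set (take K (map (sw i j) (map (sw i j) l))) \<longleftrightarrow> j \<in> set (take K (map (sw i j) l))"
      by (rule memi)
    then have "j \<in> set (take K (map (sw i j) l))" using l unfolding map_sw_sw by simp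
    then have "map (sw i j) l \<in> {l \<in> ?P. j \<in> set (take K l)}"
      using mapP l by auto
    moreover have "l = map (sw i j) (map (sw i j) l)" by (rule map_sw_sw[symmetric])
    ultimately show "l \<in> map (sw i j) ` {l \<in> ?P. j \<in> set (take K l)}"
      by (rule image_eqI[rotated])
  qed
  moreover have "inj_on (map (sw i j)) {l \<in> ?P. j \<in> set (take K l)}"
    by (rule inj_onI) (metis map_sw_sw)
  ultimately show ?thesis using card_image by fastforce
qed

lemma count_total:
  fixes n K :: nat
  assumes K: "K \<le> n"
  shows "(\<Sum>i<n. card {l \<in> permutations_of_set {..<n}. i \<in> set (take K l)}) = K * card (permutations_of_set {..<n})"
proof -
  let ?P = "permutations_of_set {..<n}"
  have finP: "finite ?P" by (rule finite_permutations_of_set)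
  have "(\<Sum>i<n. card {l \<in> ?P. i \<in> set (take K l)}) = (\<Sum>i<n. \<Sum>l\<in>?P. if i \<in> set (take K l) then 1 else 0)"
    using finP by (intro sum.cong refl) (simp add: sum.If_cases Int_def)
  also have "\<dots> = (\<Sum>l\<in>?P. \<Sum>i<n. if i \<in> set (take K l) then 1 else 0)" by (rule sum.swap)
  also have "\<dots> = (\<Sum>l\<in>?P. K)"
  proof (intro sum.cong refl)
    fix l assume l: "l \<in> ?P"
    then have len: "length l = n" and dl: "distinct l" and sl: "set l = {..<n}"
      by (auto simp: perm_length permutations_of_set_def)
    have sub: "set (take K l) \<subseteq> {..<n}" using set_take_subset sl by metis
    have "distinct (take K l)" using dl by (rule distinct_take)
    then have cK: "card (set (take K l)) = K" using len K by (simp add: distinct_card)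
    have "(\<Sum>i<n. if i \<in> set (take K l) then 1 else 0) = card ({..<n} \<inter> set (take K l))"
      by (simp add: sum.If_cases Int_def)
    also have "{..<n} \<inter> set (take K l) = set (take K l)" using sub by blast
    finally show "(\<Sum>i<n. if i \<in> set (take K l) then 1 else (0::nat)) = K" using cK by simp
  qed
  also have "\<dots> = K * card ?P" by simp
  finally show ?thesis .
qed

lemma count_each:
  fixes i n K :: nat
  assumes i: "i < n" and K: "K \<le> n"
  shows "real (card {l \<in> permutations_of_set {..<n}. i \<in> set (take K l)}) = real K * real (card (permutations_of_set {..<n})) / real n"
proof -
  let ?c = "\<lambda>i. card {l \<in> permutations_of_set {..<n}. i \<in> set (take K l)}"
  have "(\<Sum>j<n. ?c j) = (\<Sum>j<n. ?c i)" using count_sym[OF _ i] by (intro sum.cong refl) simp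
  then have "n * ?c i = K * card (permutations_of_set {..<n})" using count_total[OF K] by simp
  then have "real (n * ?c i) = real (K * card (permutations_of_set {..<n}))"
    by (simp only:)
  then have e: "real n * real (?c i) = real K * real (card (permutations_of_set {..<n}))"
    by (simp only: of_nat_mult)
  have "real n \<noteq> 0" using i by simp
  then show ?thesis using e by (simp add: eq_divide_eq mult.commute)
qed

lemma expect_const_on:
  fixes f :: "'a \<Rightarrow> real"
  assumes "\<And>T. T \<in> set_pmf p \<Longrightarrow> f T = c"
  shows "measure_pmf.expectation p f = c"
proof -
  have "measure_pmf.expectation p f = measure_pmf.expectation p (\<lambda>_. c)"
    by (intro integral_cong_AE) (auto simp: AE_measure_pmf_iff assms)
  then show ?thesis using measure_pmf.prob_space[of p] by simp
qed

lemma topK_const_prob: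
  assumes i: "i < n" and K: "K \<le> n" and v: "\<And>k. k < n \<Longrightarrow> v k = c0"
  shows "measure_pmf.expectation (topK n K v) (\<lambda>T. if i \<in> T then q else 0) = q * real K / real n"
proof -
  let ?P = "permutations_of_set {..<n}"
  have "topK n K v = topK n K (\<lambda>_. c0)" by (rule topK_cong) (simp add: v)
  also have "\<dots> = map_pmf (\<lambda>l. set (take K l)) (pmf_of_set ?P)"
    by (simp add: topK_def orderings_const)
  finally have tk: "topK n K v = map_pmf (\<lambda>l. set (take K l)) (pmf_of_set ?P)" .
  have Pne: "?P \<noteq> {}" using orderings_nonempty[of n "\<lambda>_. c0"] by (simp add: orderings_const)
  have finP: "finite ?P" by (rule finite_permutations_of_set)
  have cP: "card ?P > 0" using Pne finP by (simp add: card_gt_0_iff)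
  have "measure_pmf.expectation (topK n K v) (\<lambda>T. if i \<in> T then q else 0)
        = (\<Sum>l\<in>?P. if i \<in> set (take K l) then q else 0) / real (card ?P)"
    unfolding tk integral_map_pmf using Pne finP by (simp add: integral_pmf_of_set)
  also have "(\<Sum>l\<in>?P. if i \<in> set (take K l) then q else 0) = q * real (card {l \<in> ?P. i \<in> set (take K l)})"
    using finP by (simp add: sum.If_cases Int_def)
  also have "\<dots> = q * (real K * real (card ?P) / real n)" by (simp add: count_each[OF i K])
  finally show ?thesis using cP by simp
qed

definition LZ :: "real \<Rightarrow> (nat \<Rightarrow> real) \<Rightarrow> nat set \<Rightarrow> real" where
  "LZ b v T = b * ln (\<Sum>k\<in>T. exp (v k / b))"

definition Share :: "real \<Rightarrow> (nat \<Rightarrow> real) \<Rightarrow> nat set \<Rightarrow> nat \<Rightarrow> real" where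
  "Share b v T i = (if i \<in> T then exp (v i / b) / (\<Sum>k\<in>T. exp (v k / b)) * LZ b v T else 0)"

lemma user_util_eq:
  assumes b: "b > 0" and K: "1 \<le> K" "K \<le> n"
  shows "user_util n \<sigma> b K s x = measure_pmf.expectation (topK n K (\<lambda>i. \<sigma> (s i) x)) (LZ b (\<lambda>i. \<sigma> (s i) x))"
  unfolding user_util_def
proof (intro integral_cong_AE)
  show "AE T in measure_pmf (topK n K (\<lambda>i. \<sigma> (s i) x)).
          (\<integral>\<epsilon>. Max ((\<lambda>i. \<sigma> (s i) x + \<epsilon> i) ` T) \<partial>noise n b) = LZ b (\<lambda>i. \<sigma> (s i) x) T"
  proof (rule AE_pmfI)
    fix T assume T: "T \<in> set_pmf (topK n K (\<lambda>i. \<sigma> (s i) x))"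
    show "(\<integral>\<epsilon>. Max ((\<lambda>i. \<sigma> (s i) x + \<epsilon> i) ` T) \<partial>noise n b) = LZ b (\<lambda>i. \<sigma> (s i) x) T"
      unfolding LZ_def by (rule Max_integral[OF b topK_sets(1)[OF T K(2)] topK_sets(3)[OF T K(2) K(1)]])
  qed
qed simp_all

lemma player_util_eq:
  assumes b: "b > 0" and K: "1 \<le> K" "K \<le> n"
  shows "player_util n X \<sigma> b K i s = (\<Sum>x\<in>X. measure_pmf.expectation (topK n K (\<lambda>k. \<sigma> (s k) x)) (\<lambda>T. Share b (\<lambda>k. \<sigma> (s k) x) T i))"
  unfolding player_util_def
proof (intro sum.cong refl integral_cong_AE)
  fix x
  show "AE T in measure_pmf (topK n K (\<lambda>k. \<sigma> (s k) x)).
          (\<integral>\<epsilon>. (if chosen T (\<lambda>k. \<sigma> (s k) x) \<epsilon> i then \<sigma> (s i) x + \<epsilon> i else 0) \<partial>noise n b) = Share b (\<lambda>k. \<sigma> (s k) x) T i"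
  proof (rule AE_pmfI)
    fix T assume T: "T \<in> set_pmf (topK n K (\<lambda>k. \<sigma> (s k) x))"
    show "(\<integral>\<epsilon>. (if chosen T (\<lambda>k. \<sigma> (s k) x) \<epsilon> i then \<sigma> (s i) x + \<epsilon> i else 0) \<partial>noise n b) = Share b (\<lambda>k. \<sigma> (s k) x) T i"
      unfolding Share_def LZ_def using chosen_integral[OF b topK_sets(1)[OF T K(2)], of "\<lambda>k. \<sigma> (s k) x" i]
      by simp
  qed
qed simp_all

lemma LZ_const:
  assumes b: "b > 0" and v: "\<And>k. k \<in> T \<Longrightarrow> v k = c" and cT: "card T = K" and K: "K \<ge> 1"
  shows "LZ b v T = c + b * ln K"
proof -
  have "(\<Sum>k\<in>T. exp (v k / b)) = real K * exp (c / b)" using v cT by simp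
  then have "LZ b v T = b * (ln (real K) + c / b)" using K by (simp add: LZ_def ln_mult)
  moreover have "b * (c / b) = c" using b by simp
  ultimately show ?thesis by (simp add: distrib_left)
qed

lemma Share_const:
  assumes b: "b > 0" and v: "\<And>k. k \<in> T \<Longrightarrow> v k = c" and cT: "card T = K" and K: "K \<ge> 1" and iT: "i \<in> T"
  shows "Share b v T i = (c + b * ln K) / K"
proof -
  have "(\<Sum>k\<in>T. exp (v k / b)) = real K * exp (c / b)" using v cT by simp
  then show ?thesis using iT K v[OF iT] LZ_const[OF b v cT K] by (simp add: Share_def)
qed

lemma LZ_ge:
  assumes b: "b > 0" and fin: "finite T" and jT: "j \<in> T"
  shows "v j \<le> LZ b v T"
proof -
  have le: "exp (v j / b) \<le> (\<Sum>k\<in>T. exp (v k / b))"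
    using fin jT by (intro member_le_sum) auto
  have "0 < (\<Sum>k\<in>T. exp (v k / b))" using le exp_gt_zero[of "v j / b"] by linarith
  then have "ln (exp (v j / b)) \<le> ln (\<Sum>k\<in>T. exp (v k / b))"
    using le by (subst ln_le_cancel_iff) auto
  then have "v j / b \<le> ln (\<Sum>k\<in>T. exp (v k / b))" by simp
  then show ?thesis using b by (simp add: LZ_def field_simps)
qed

lemma Share_le:
  assumes b: "b > 0" and fin: "finite T" and cT: "card T = K" and iT: "i \<in> T"
    and v: "\<And>k. k \<in> T \<Longrightarrow> 0 \<le> v k \<and> v k \<le> 1"
  shows "Share b v T i \<le> 1 + b * ln K"
proof -
  define Z where "Z = (\<Sum>k\<in>T. exp (v k / b))"
  have Zi: "exp (v i / b) \<le> Z" unfolding Z_def using fin iT by (intro member_le_sum) auto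
  have "0 \<le> v i / b" using v[OF iT] b by simp
  then have "1 \<le> exp (v i / b)" by simp
  then have Z1: "1 \<le> Z" using Zi by linarith
  have ZK: "Z \<le> real K * exp (1 / b)"
  proof -
    have "Z \<le> (\<Sum>k\<in>T. exp (1 / b))" unfolding Z_def
      using v b by (intro sum_mono) (auto simp: divide_right_mono)
    then show ?thesis using cT by simp
  qed
  have Kpos: "real K > 0" using cT iT fin by (auto simp: card_gt_0_iff)
  have LZ0: "0 \<le> LZ b v T" using Z1 b by (simp add: LZ_def Z_def[symmetric])
  have "LZ b v T \<le> b * ln (real K * exp (1 / b))"
    unfolding LZ_def Z_def[symmetric] using Z1 ZK b by (intro mult_left_mono) auto
  also have "\<dots> = 1 + b * ln K" using Kpos b by (simp add: ln_mult field_simps)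
  finally have LZle: "LZ b v T \<le> 1 + b * ln K" .
  have r: "exp (v i / b) / Z \<le> 1" using Zi Z1 by simp
  have "Share b v T i = exp (v i / b) / Z * LZ b v T" using iT by (simp add: Share_def Z_def)
  also have "\<dots> \<le> 1 * LZ b v T" by (rule mult_right_mono[OF r LZ0])
  finally show ?thesis using LZle by simp
qed

definition wv :: "nat \<Rightarrow> real" where "wv n = 1 - 1 / (2 * real n)"
definition stA :: "real list" where "stA = [0, 0]"
definition stB :: "nat \<Rightarrow> real list" where "stB i = [1, real i]"
definition ua :: "nat \<Rightarrow> real list" where "ua m = [2, real m]"
definition ub :: "nat \<Rightarrow> real list" where "ub j = [3, real j]"
definition Sg :: "nat \<Rightarrow> real list set" where "Sg i = {stA, stB i}"
definition Xg :: "nat \<Rightarrow> real list set" where "Xg n = ua ` {..<n} \<union> ub ` {..<n}"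
definition sig :: "nat \<Rightarrow> real list \<Rightarrow> real list \<Rightarrow> real" where
  "sig n s x = (if x ! 0 = 2 then (if s ! 0 = 0 then 1 else wv n)
                else if x ! 0 = 3 \<and> s ! 0 = 1 \<and> s ! 1 = x ! 1 then 1 else 0)"
definition sA :: "nat \<Rightarrow> nat \<Rightarrow> real list" where "sA n = restrict (\<lambda>_. stA) {..<n}"
definition sB :: "nat \<Rightarrow> nat \<Rightarrow> real list" where "sB n = restrict stB {..<n}"

lemma sig_vals[simp]:
  "sig n stA (ua m) = 1" "sig n (stB i) (ua m) = wv n"
  "sig n stA (ub j) = 0" "sig n (stB i) (ub j) = (if i = j then 1 else 0)"
  by (auto simp: sig_def stA_def stB_def ua_def ub_def)

lemma wv_bounds: "n > 0 \<Longrightarrow> 0 < wv n \<and> wv n < 1"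
proof -
  assume n: "n > 0"
  then have "1 / (2 * real n) \<le> 1/2" by (simp add: field_simps)
  moreover have "1 / (2 * real n) > 0" using n by simp
  ultimately show ?thesis by (simp add: wv_def)
qed

lemma inj_ua: "inj ua" by (auto simp: inj_def ua_def)
lemma inj_ub: "inj ub" by (auto simp: inj_def ub_def)

lemma sum_Xg: "(\<Sum>x\<in>Xg n. F x) = (\<Sum>m<n. F (ua m)) + (\<Sum>j<n. F (ub j))"
proof -
  have dis: "ua ` {..<n} \<inter> ub ` {..<n} = {}" by (auto simp: ua_def ub_def)
  have "(\<Sum>x\<in>Xg n. F x) = (\<Sum>x\<in>ua ` {..<n}. F x) + (\<Sum>x\<in>ub ` {..<n}. F x)"
    unfolding Xg_def by (rule sum.union_disjoint) (use dis in auto)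
  also have "\<dots> = (\<Sum>m<n. F (ua m)) + (\<Sum>j<n. F (ub j))"
    using inj_ua inj_ub by (simp add: sum.reindex inj_on_def inj_def)
  finally show ?thesis .
qed

lemma game_ok:
  assumes b: "0 < b" and K: "1 \<le> K" "K \<le> n" and n: "n > 0"
  shows "cc_game n 2 Sg (Xg n) (sig n) b K"
  unfolding cc_game_def
proof (intro conjI allI impI ballI)
  show "finite (Xg n)" by (simp add: Xg_def)
  show "length x = 2" if "x \<in> Xg n" for x using that by (auto simp: Xg_def ua_def ub_def)
  fix a c :: "real list"
  show "0 \<le> sig n a c" using wv_bounds[OF n] by (auto simp: sig_def)
  show "sig n a c \<le> 1" using wv_bounds[OF n] by (auto simp: sig_def)
qed (use b K in \<open>auto simp: Sg_def stA_def stB_def\<close>)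

lemma sA_prof: "sA n \<in> profiles n Sg" by (auto simp: profiles_def sA_def Sg_def)
lemma sB_prof: "sB n \<in> profiles n Sg" by (auto simp: profiles_def sB_def Sg_def)
lemma dev_prof: "i < n \<Longrightarrow> (sA n)(i := stB i) \<in> profiles n Sg"
  by (auto simp: profiles_def sA_def Sg_def PiE_def extensional_def)

lemma expect_ge_on:
  fixes f :: "'a \<Rightarrow> real"
  assumes fin: "finite (set_pmf p)" and ge: "\<And>T. T \<in> set_pmf p \<Longrightarrow> c \<le> f T"
  shows "c \<le> measure_pmf.expectation p f"
proof -
  have "measure_pmf.expectation p (\<lambda>_. c) \<le> measure_pmf.expectation p f"
    by (intro integral_mono_AE integrable_measure_pmf_finite fin) (auto simp: AE_measure_pmf_iff ge)
  then show ?thesis by simp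
qed

lemma expect_le_on:
  fixes f :: "'a \<Rightarrow> real"
  assumes fin: "finite (set_pmf p)" and le: "\<And>T. T \<in> set_pmf p \<Longrightarrow> f T \<le> c"
  shows "measure_pmf.expectation p f \<le> c"
proof -
  have "measure_pmf.expectation p f \<le> measure_pmf.expectation p (\<lambda>_. c)"
    by (intro integral_mono_AE integrable_measure_pmf_finite fin) (auto simp: AE_measure_pmf_iff le)
  then show ?thesis by simp
qed

lemma expect_cong_on:
  fixes f g :: "'a \<Rightarrow> real"
  assumes "\<And>T. T \<in> set_pmf p \<Longrightarrow> f T = g T"
  shows "measure_pmf.expectation p f = measure_pmf.expectation p g"
  by (intro integral_cong_AE) (auto simp: AE_measure_pmf_iff assms)

context
  fixes n K :: nat and b :: real
  assumes b: "b > 0" and K1: "1 \<le> K" and Kn: "K < n"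
begin

lemma Kle: "K \<le> n" using Kn by simp
lemma npos: "n > 0" using Kn by simp

lemma uu_A_ua: "m < n \<Longrightarrow> user_util n (sig n) b K (sA n) (ua m) = 1 + b * ln K"
  unfolding user_util_eq[OF b K1 Kle]
proof (rule expect_const_on)
  fix T assume T: "T \<in> set_pmf (topK n K (\<lambda>i. sig n (sA n i) (ua m)))"
  show "LZ b (\<lambda>i. sig n (sA n i) (ua m)) T = 1 + b * ln K"
    by (rule LZ_const[OF b _ topK_sets(2)[OF T Kle] K1])
       (use topK_sets(1)[OF T Kle] in \<open>auto simp: sA_def\<close>)
qed

lemma uu_A_ub: "user_util n (sig n) b K (sA n) (ub j) = b * ln K"
  unfolding user_util_eq[OF b K1 Kle]
proof (rule expect_const_on)
  fix T assume T: "T \<in> set_pmf (topK n K (\<lambda>i. sig n (sA n i) (ub j)))"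
  have "LZ b (\<lambda>i. sig n (sA n i) (ub j)) T = 0 + b * ln K"
    by (rule LZ_const[OF b _ topK_sets(2)[OF T Kle] K1])
       (use topK_sets(1)[OF T Kle] in \<open>auto simp: sA_def\<close>)
  then show "LZ b (\<lambda>i. sig n (sA n i) (ub j)) T = b * ln K" by simp
qed

lemma uu_B_ua: "user_util n (sig n) b K (sB n) (ua m) = wv n + b * ln K"
  unfolding user_util_eq[OF b K1 Kle]
proof (rule expect_const_on)
  fix T assume T: "T \<in> set_pmf (topK n K (\<lambda>i. sig n (sB n i) (ua m)))"
  show "LZ b (\<lambda>i. sig n (sB n i) (ua m)) T = wv n + b * ln K"
    by (rule LZ_const[OF b _ topK_sets(2)[OF T Kle] K1])
       (use topK_sets(1)[OF T Kle] in \<open>auto simp: sB_def\<close>)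
qed

lemma uu_B_ub:
  assumes j: "j < n"
  shows "1 \<le> user_util n (sig n) b K (sB n) (ub j)"
  unfolding user_util_eq[OF b K1 Kle]
proof (rule expect_ge_on[OF topK_finite])
  fix T assume T: "T \<in> set_pmf (topK n K (\<lambda>i. sig n (sB n i) (ub j)))"
  have jT: "j \<in> T"
    by (rule in_topK[OF j K1 _ T]) (auto simp: sB_def j)
  have "(\<lambda>i. sig n (sB n i) (ub j)) j \<le> LZ b (\<lambda>i. sig n (sB n i) (ub j)) T"
    by (rule LZ_ge[OF b _ jT]) (rule finite_subset[OF topK_sets(1)[OF T Kle]], simp)
  then show "1 \<le> LZ b (\<lambda>i. sig n (sB n i) (ub j)) T" using j by (simp add: sB_def)
qed

lemma W_A: "welfare n (Xg n) (sig n) b K (sA n) = real n * (1 + b * ln K) + real n * (b * ln K)"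
  unfolding welfare_def sum_Xg by (simp add: uu_A_ua uu_A_ub)

lemma W_B: "real n * (wv n + b * ln K) + real n \<le> welfare n (Xg n) (sig n) b K (sB n)"
proof -
  have "(\<Sum>j<n. (1::real)) \<le> (\<Sum>j<n. user_util n (sig n) b K (sB n) (ub j))"
    by (intro sum_mono uu_B_ub) simp
  then show ?thesis unfolding welfare_def sum_Xg by (simp add: uu_B_ua)
qed

lemma W_lower:
  assumes s: "s \<in> profiles n Sg"
  shows "real n * wv n \<le> welfare n (Xg n) (sig n) b K s"
proof -
  have sk: "s k = stA \<or> s k = stB k" if "k < n" for k
  proof -
    have "s k \<in> Sg k" using s that unfolding profiles_def by (simp add: PiE_iff)
    then show ?thesis by (simp add: Sg_def)
  qed
  have a: "wv n \<le> user_util n (sig n) b K s (ua m)" for m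
    unfolding user_util_eq[OF b K1 Kle]
  proof (rule expect_ge_on[OF topK_finite])
    fix T assume T: "T \<in> set_pmf (topK n K (\<lambda>i. sig n (s i) (ua m)))"
    from topK_sets(3)[OF T Kle K1] obtain j where jT: "j \<in> T" by auto
    have jn: "j < n" using topK_sets(1)[OF T Kle] jT by auto
    have "(\<lambda>i. sig n (s i) (ua m)) j \<le> LZ b (\<lambda>i. sig n (s i) (ua m)) T"
      by (rule LZ_ge[OF b _ jT]) (rule finite_subset[OF topK_sets(1)[OF T Kle]], simp)
    moreover have "wv n \<le> sig n (s j) (ua m)"
    proof (cases "s j = stA")
      case True then show ?thesis using wv_bounds[OF npos] by simp
    next
      case False then have "s j = stB j" using sk[OF jn] by simp
      then show ?thesis by simp
    qed
    ultimately show "wv n \<le> LZ b (\<lambda>i. sig n (s i) (ua m)) T" by simp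
  qed
  have c: "0 \<le> user_util n (sig n) b K s (ub j)" for j
    unfolding user_util_eq[OF b K1 Kle]
  proof (rule expect_ge_on[OF topK_finite])
    fix T assume T: "T \<in> set_pmf (topK n K (\<lambda>i. sig n (s i) (ub j)))"
    from topK_sets(3)[OF T Kle K1] obtain k where kT: "k \<in> T" by auto
    have kn: "k < n" using topK_sets(1)[OF T Kle] kT by auto
    have "(\<lambda>i. sig n (s i) (ub j)) k \<le> LZ b (\<lambda>i. sig n (s i) (ub j)) T"
      by (rule LZ_ge[OF b _ kT]) (rule finite_subset[OF topK_sets(1)[OF T Kle]], simp)
    moreover have "0 \<le> sig n (s k) (ub j)"
    proof (cases "s k = stA")
      case True then show ?thesis by simp
    next
      case False then have "s k = stB k" using sk[OF kn] by simp
      then show ?thesis by simp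
    qed
    ultimately show "0 \<le> LZ b (\<lambda>i. sig n (s i) (ub j)) T" by simp
  qed
  have "(\<Sum>m<n. wv n) \<le> (\<Sum>m<n. user_util n (sig n) b K s (ua m))" by (intro sum_mono a)
  moreover have "0 \<le> (\<Sum>j<n. user_util n (sig n) b K s (ub j))" by (intro sum_nonneg c)
  ultimately show ?thesis unfolding welfare_def sum_Xg by simp
qed

lemma pu_A_x:
  assumes i: "i < n" and v: "\<And>k. k < n \<Longrightarrow> sig n (sA n k) x = c"
  shows "measure_pmf.expectation (topK n K (\<lambda>k. sig n (sA n k) x)) (\<lambda>T. Share b (\<lambda>k. sig n (sA n k) x) T i)
         = (c + b * ln K) / n"
proof -
  have "measure_pmf.expectation (topK n K (\<lambda>k. sig n (sA n k) x)) (\<lambda>T. Share b (\<lambda>k. sig n (sA n k) x) T i)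
      = measure_pmf.expectation (topK n K (\<lambda>k. sig n (sA n k) x)) (\<lambda>T. if i \<in> T then (c + b * ln K) / K else 0)"
  proof (rule expect_cong_on)
    fix T assume T: "T \<in> set_pmf (topK n K (\<lambda>k. sig n (sA n k) x))"
    show "Share b (\<lambda>k. sig n (sA n k) x) T i = (if i \<in> T then (c + b * ln K) / K else 0)"
    proof (cases "i \<in> T")
      case True
      have "Share b (\<lambda>k. sig n (sA n k) x) T i = (c + b * ln K) / K"
        by (rule Share_const[OF b _ topK_sets(2)[OF T Kle] K1 True])
           (use topK_sets(1)[OF T Kle] v in auto)
      then show ?thesis using True by simp
    qed (simp add: Share_def)
  qed
  also have "\<dots> = (c + b * ln K) / K * real K / real n"
    by (rule topK_const_prob[OF i Kle v])
  also have "\<dots> = (c + b * ln K) / n" using K1 by simp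
  finally show ?thesis .
qed

lemma pu_A:
  assumes i: "i < n"
  shows "player_util n (Xg n) (sig n) b K i (sA n) = (1 + b * ln K) + b * ln K"
proof -
  have a: "measure_pmf.expectation (topK n K (\<lambda>k. sig n (sA n k) (ua m))) (\<lambda>T. Share b (\<lambda>k. sig n (sA n k) (ua m)) T i)
         = (1 + b * ln K) / n" for m
    by (rule pu_A_x[OF i]) (simp add: sA_def)
  have c: "measure_pmf.expectation (topK n K (\<lambda>k. sig n (sA n k) (ub j))) (\<lambda>T. Share b (\<lambda>k. sig n (sA n k) (ub j)) T i)
         = (0 + b * ln K) / n" for j
    by (rule pu_A_x[OF i]) (simp add: sA_def)
  show ?thesis unfolding player_util_eq[OF b K1 Kle] sum_Xg a c using npos by simp
qed

lemma pu_dev: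
  assumes i: "i < n"
  shows "player_util n (Xg n) (sig n) b K i ((sA n)(i := stB i)) \<le> (1 + b * ln K) + (real n - 1) * (b * ln K) / n"
proof -
  define s' where "s' = (sA n)(i := stB i)"
  have s'i: "s' i = stB i" and s'k: "\<And>k. k < n \<Longrightarrow> k \<noteq> i \<Longrightarrow> s' k = stA"
    by (auto simp: s'_def sA_def)
  have a: "measure_pmf.expectation (topK n K (\<lambda>k. sig n (s' k) (ua m))) (\<lambda>T. Share b (\<lambda>k. sig n (s' k) (ua m)) T i) = 0" for m
  proof (rule expect_const_on)
    fix T assume T: "T \<in> set_pmf (topK n K (\<lambda>k. sig n (s' k) (ua m)))"
    have "i \<notin> T"
      by (rule not_in_topK[OF i Kn _ T]) (use wv_bounds[OF npos] s'i s'k in auto)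
    then show "Share b (\<lambda>k. sig n (s' k) (ua m)) T i = 0" by (simp add: Share_def)
  qed
  have c: "measure_pmf.expectation (topK n K (\<lambda>k. sig n (s' k) (ub j))) (\<lambda>T. Share b (\<lambda>k. sig n (s' k) (ub j)) T i)
         = (0 + b * ln K) / n" if "j \<noteq> i" for j
  proof -
    have e: "(\<lambda>k. sig n (s' k) (ub j)) = (\<lambda>k. sig n (sA n k) (ub j))"
      using that i by (intro ext) (auto simp: s'_def sA_def)
    show ?thesis unfolding e by (rule pu_A_x[OF i]) (simp add: sA_def)
  qed
  have d: "measure_pmf.expectation (topK n K (\<lambda>k. sig n (s' k) (ub i))) (\<lambda>T. Share b (\<lambda>k. sig n (s' k) (ub i)) T i)
         \<le> 1 + b * ln K"
  proof (rule expect_le_on[OF topK_finite])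
    fix T assume T: "T \<in> set_pmf (topK n K (\<lambda>k. sig n (s' k) (ub i)))"
    have iT: "i \<in> T"
      by (rule in_topK[OF i K1 _ T]) (use s'i s'k in auto)
    show "Share b (\<lambda>k. sig n (s' k) (ub i)) T i \<le> 1 + b * ln K"
    proof (rule Share_le[OF b _ topK_sets(2)[OF T Kle] iT])
      show "finite T" by (rule finite_subset[OF topK_sets(1)[OF T Kle]]) simp
      fix k assume "k \<in> T"
      then have "k < n" using topK_sets(1)[OF T Kle] by auto
      then show "0 \<le> sig n (s' k) (ub i) \<and> sig n (s' k) (ub i) \<le> 1"
        using s'i s'k by (cases "k = i") auto
    qed
  qed
  define F where "F = (\<lambda>j. measure_pmf.expectation (topK n K (\<lambda>k. sig n (s' k) (ub j))) (\<lambda>T. Share b (\<lambda>k. sig n (s' k) (ub j)) T i))"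
  have "(\<Sum>j<n. F j) = F i + (\<Sum>j\<in>{..<n}-{i}. F j)"
    using i by (simp add: sum.remove)
  also have "(\<Sum>j\<in>{..<n}-{i}. F j) = (\<Sum>j\<in>{..<n}-{i}. b * ln K / n)"
    by (intro sum.cong refl) (auto simp: F_def c)
  also have "\<dots> = (real n - 1) * (b * ln K) / n"
    using i by (simp add: card_Diff_singleton of_nat_diff)
  finally have sumF: "(\<Sum>j<n. F j) \<le> (1 + b * ln K) + (real n - 1) * (b * ln K) / n"
    using d by (simp add: F_def)
  have "player_util n (Xg n) (sig n) b K i s' = (\<Sum>j<n. F j)"
    unfolding player_util_eq[OF b K1 Kle] sum_Xg a F_def by simp
  then show ?thesis using sumF by (simp add: s'_def)
qed

end

lemma final_ineq:
  fixes n d :: real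
  assumes n: "n > 2" and d0: "0 \<le> d" and d1: "d \<le> 1/5"
  shows "(n - 1) / n + 1 / (1 + 5 * d) < (n * ((1 - 1 / (2 * n)) + d) + n) / (n * (1 + d) + n * d)"
proof -
  have pos1: "1 + 5 * d > 0" and pos2: "1 + 2 * d > 0" using d0 by auto
  have R: "(n * ((1 - 1 / (2 * n)) + d) + n) / (n * (1 + d) + n * d) = (4 * n - 1 + 2 * n * d) / (2 * n * (1 + 2 * d))"
  proof -
    have "n * (1 + 2 * d) > 0" using n pos2 by simp
    then have d1: "n * (1 + d) + n * d \<noteq> 0" by (simp add: algebra_simps)
    have d2: "2 * n * (1 + 2 * d) \<noteq> 0" using n pos2 by simp
    have "(n * ((1 - 1 / (2 * n)) + d) + n) * (2 * n * (1 + 2 * d)) = (4 * n - 1 + 2 * n * d) * (n * (1 + d) + n * d)"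
      using n by (simp add: algebra_simps)
    moreover note frac_eq_eq[OF d1 d2, of "n * ((1 - 1 / (2 * n)) + d) + n" "4 * n - 1 + 2 * n * d"]
    ultimately show ?thesis by (rule iffD2[rotated])
  qed
  have L: "(n - 1) / n + 1 / (1 + 5 * d) = ((n - 1) * (1 + 5 * d) + n) / (n * (1 + 5 * d))"
    using n pos1 by (simp add: field_simps)
  have key: "0 < 1 + 9 * d + 20 * d^2 + n * d * (4 - 10 * d)"
  proof -
    have "0 \<le> n * d * (4 - 10 * d)" using n d0 d1 by (intro mult_nonneg_nonneg) auto
    moreover have "0 \<le> d^2" by simp
    ultimately show ?thesis using d0 by linarith
  qed
  have "((n - 1) * (1 + 5 * d) + n) * (2 * n * (1 + 2 * d)) < (4 * n - 1 + 2 * n * d) * (n * (1 + 5 * d))"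
  proof -
    have "(4 * n - 1 + 2 * n * d) * (n * (1 + 5 * d)) - ((n - 1) * (1 + 5 * d) + n) * (2 * n * (1 + 2 * d))
          = n * (1 + 9 * d + 20 * d^2 + n * d * (4 - 10 * d))"
      by (simp add: algebra_simps power2_eq_square)
    moreover have "0 < n * (1 + 9 * d + 20 * d^2 + n * d * (4 - 10 * d))" using key n by simp
    ultimately show ?thesis by linarith
  qed
  then have "((n - 1) * (1 + 5 * d) + n) / (n * (1 + 5 * d)) < (4 * n - 1 + 2 * n * d) / (2 * n * (1 + 2 * d))"
    using n pos1 pos2 by (simp add: divide_less_eq less_divide_eq mult.assoc mult.left_commute) 
  then show ?thesis using L R by simp
qed

lemma PoA_ge:
  fixes WB WA I M :: real
  assumes pos: "0 < WB" "0 < WA" "0 < I" and I: "I \<le> WA" and M: "WB \<le> M"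
  shows "WB / WA \<le> M / I"
proof -
  have "WB / WA \<le> WB / I" using pos I by (intro divide_left_mono) auto
  also have "\<dots> \<le> M / I" using M pos by (intro divide_right_mono) auto
  finally show ?thesis .
qed

theorem theorem2:
  fixes \<beta> :: real and n K :: nat
  assumes "0 < \<beta>" and "\<beta> \<le> 1" and "n > 2" and "1 \<le> K" and "K \<le> n - 1"
    and "real K \<le> exp (1 / (5 * \<beta>))"
  shows "\<exists>(d::nat) (S :: nat \<Rightarrow> real list set) (X :: real list set)
            (\<sigma> :: real list \<Rightarrow> real list \<Rightarrow> real).
           cc_game n d S X \<sigma> \<beta> K \<and>
           PoA n S X \<sigma> \<beta> K > (real n - 1) / real n + 1 / (1 + 5 * \<beta> * ln (real K))"
proof (intro exI conjI)
  note b = assms(1)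
  note K1 = assms(4)
  have Kn: "K < n" using assms(3,5) by simp
  have Kle: "K \<le> n" using Kn by simp
  have n0: "n > 0" using Kn by simp
  show "cc_game n 2 Sg (Xg n) (sig n) \<beta> K" by (rule game_ok[OF b K1 Kle n0])
  define d where "d = \<beta> * ln (real K)"
  have d0: "0 \<le> d" unfolding d_def using b K1 by simp
  have "ln (real K) \<le> 1 / (5 * \<beta>)"
    using assms(6) K1 by (metis ln_exp ln_le_cancel_iff exp_gt_zero of_nat_0_less_iff less_le_trans zero_less_one le_less_trans not_le)
  then have d1: "d \<le> 1/5" unfolding d_def using b by (simp add: field_simps)
  define W where "W = welfare n (Xg n) (sig n) \<beta> K"
  define C where "C = (\<lambda>\<alpha>. measure_pmf.expectation \<alpha> W) ` {\<alpha>. is_CCE n Sg (Xg n) (sig n) \<beta> K \<alpha>}"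
  have WA: "W (sA n) = real n * (1 + d) + real n * d" unfolding W_def d_def by (rule W_A[OF b K1 Kn])
  have WB: "real n * (wv n + d) + real n \<le> W (sB n)" unfolding W_def d_def by (rule W_B[OF b K1 Kn])
  have finprof: "finite (profiles n Sg)" unfolding profiles_def by (rule finite_PiE) (auto simp: Sg_def)
  have cce: "is_CCE n Sg (Xg n) (sig n) \<beta> K (return_pmf (sA n))"
    unfolding is_CCE_def
  proof (intro conjI allI impI ballI)
    show "set_pmf (return_pmf (sA n)) \<subseteq> profiles n Sg" using sA_prof by simp
    fix i s' assume i: "i < n" and s': "s' \<in> Sg i"
    show "measure_pmf.expectation (return_pmf (sA n)) (\<lambda>s. player_util n (Xg n) (sig n) \<beta> K i (s(i := s')))
          \<le> measure_pmf.expectation (return_pmf (sA n)) (player_util n (Xg n) (sig n) \<beta> K i)"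
    proof (cases "s' = stA")
      case True
      have "(sA n)(i := s') = sA n" using True i by (auto simp: sA_def)
      then show ?thesis by simp
    next
      case False
      then have s'B: "s' = stB i" using s' by (simp add: Sg_def)
      have "player_util n (Xg n) (sig n) \<beta> K i ((sA n)(i := stB i)) \<le> (1 + d) + (real n - 1) * d / n"
        unfolding d_def by (rule pu_dev[OF b K1 Kn i])
      also have "\<dots> \<le> (1 + d) + d"
      proof -
        have "(real n - 1) * d / n \<le> d" using d0 n0 by (simp add: field_simps)
        then show ?thesis by simp
      qed
      also have "\<dots> = player_util n (Xg n) (sig n) \<beta> K i (sA n)"
        unfolding d_def by (rule pu_A[OF b K1 Kn i, symmetric])
      finally show ?thesis using s'B by simp
    qed
  qed
  have WAC: "W (sA n) \<in> C" unfolding C_def using cce by (auto intro!: image_eqI[of _ _ "return_pmf (sA n)"])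
  have lowC: "real n * wv n \<le> c" if "c \<in> C" for c
  proof -
    obtain \<alpha> where \<alpha>: "is_CCE n Sg (Xg n) (sig n) \<beta> K \<alpha>" and c: "c = measure_pmf.expectation \<alpha> W"
      using \<open>c \<in> C\<close> unfolding C_def by blast
    have sub: "set_pmf \<alpha> \<subseteq> profiles n Sg" using \<alpha> by (simp add: is_CCE_def)
    have "real n * wv n \<le> measure_pmf.expectation \<alpha> W"
    proof (rule expect_ge_on)
      show "finite (set_pmf \<alpha>)" using finite_subset[OF sub finprof] .
      fix s assume "s \<in> set_pmf \<alpha>"
      then have "s \<in> profiles n Sg" using sub by blast
      then show "real n * wv n \<le> W s" unfolding W_def by (rule W_lower[OF b K1 Kn])
    qed
    then show ?thesis using c by simp
  qed
  have bdd: "bdd_below C" using lowC by (auto simp: bdd_below_def)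
  have InfA: "Inf C \<le> W (sA n)" by (rule cInf_lower[OF WAC bdd])
  have Infpos: "real n * wv n \<le> Inf C" using WAC lowC by (intro cInf_greatest) auto
  have wpos: "0 < wv n" using wv_bounds[OF n0] by simp
  have Ipos: "0 < Inf C" using Infpos wpos n0 by (smt (verit) mult_pos_pos of_nat_0_less_iff)
  have MaxB: "W (sB n) \<le> Max (W ` profiles n Sg)"
    using finprof sB_prof by (intro Max_ge) auto
  have WApos: "0 < W (sA n)" using WA d0 n0 by (simp add: add_pos_nonneg)
  have WBpos: "0 < real n * (wv n + d) + real n" using wpos d0 n0 by (simp add: add_pos_nonneg)
  have "(real n - 1) / real n + 1 / (1 + 5 * d) < (real n * ((1 - 1 / (2 * real n)) + d) + real n) / (real n * (1 + d) + real n * d)"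
    by (rule final_ineq) (use assms(3) d0 d1 in auto)
  also have "\<dots> = (real n * (wv n + d) + real n) / W (sA n)" by (simp add: WA wv_def)
  also have "\<dots> \<le> W (sB n) / W (sA n)" using WB WApos by (intro divide_right_mono) auto
  also have "\<dots> \<le> Max (W ` profiles n Sg) / Inf C"
    by (rule PoA_ge) (use WBpos WB WApos Ipos InfA MaxB in auto)
  also have "\<dots> = PoA n Sg (Xg n) (sig n) \<beta> K" by (simp add: PoA_def W_def C_def)
  finally show "(real n - 1) / real n + 1 / (1 + 5 * \<beta> * ln (real K)) < PoA n Sg (Xg n) (sig n) \<beta> K"
    by (simp add: d_def mult.assoc)
qed

end
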